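(* Let $M\in[0,1]^{m\times n}$ with $\|M\|_*\le t$, let $\rho\in[0,1)$ and $\delta\in(0,1)$. Let $Y\in\{0,1\}^{m\times n}$ have independent entries with $P(Y_{ij}=1)=M_{ij}$, and let $A\in\{0,1\}^{m\times n}$ be obtained by revealing each 1 of $Y$ independently with probability $1-\rho$ (so $P(A_{ij}=1)=M_{ij}(1-\rho)$, and $A_{ij}=0$ otherwise). Let $F_u\in\mathbb{R}^{m\times d}$ and $F_v\in\mathbb{R}^{n\times d}$ have orthonormal columns, with rows ${\boldsymbol u}_i$ ($i=1,\dots,m$) and ${\boldsymbol v}_j$ ($j=1,\dots,n$), and set $\mathcal{X}_u=\max_i\|{\boldsymbol u}_i\|$, $\mathcal{X}_v=\max_j\|{\boldsymbol v}_j\|$. Assume $M=F_uF_u^TMF_vF_v^T$. Define $$\tilde{\ell}(x,a)=\begin{cases}\dfrac{(x-1)^2-\rho x^2}{1-\rho} & \text{if } a=1,\\[1mm] x^2 & \text{if } a=0,\end{cases}$$ and let $\hat{D}$ be an optimal solution of $$\min_{D\in\mathbb{R}^{d\times d}}\sum_{i,j}\tilde{\ell}\big((F_uDF_v^T)_{ij},A_{ij}\big)\quad\text{subject to}\quad\|D\|_*\le t,\ 0\le (F_uDF_v^T)_{ij}\le 1\ \forall (i,j).$$ Then, with probability at least $1-\delta$, $$\frac{1}{mn}\sum_{i,j}\big(M_{ij}-(F_u\hat{D}F_v^T)_{ij}\big)^2\le 6\,\frac{\sqrt{\log(2/\delta)}}{\sqrt{mn}\,(1-\rho)}+\frac{4t\sqrt{\log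 2d}}{\sqrt{mn}\sqrt{1-\rho}}\,\mathcal{X}_u\mathcal{X}_v .$$
   Context: $\|\cdot\|_*$ is the nuclear norm. This is the inductive version of shifted matrix completion for PU learning in the non-deterministic setting, where row features $F_u$ and column features $F_v$ are given and the estimate is $F_u\hat{D}F_v^T$. *)

theory Defs
  imports "Jordan_Normal_Form.Char_Poly" "HOL-Probability.Product_PMF"
begin

text \<open>Nuclear norm: sum of the singular values of A, i.e. the square roots of the
  eigenvalues (with algebraic multiplicity) of A^T A, the roots of its characteristic polynomial.\<close>
definition nuclear_norm :: "real mat \<Rightarrow> real" where
  "nuclear_norm A = sum_mset (image_mset sqrt (proots (char_poly (transpose_mat A * A))))"

definition loss_tilde :: "real \<Rightarrow> real \<Rightarrow> real \<Rightarrow> real" where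
  "loss_tilde \<rho> x a = (if a = 1 then ((x - 1)^2 - \<rho> * x^2) / (1 - \<rho>) else x^2)"

definition row_norm :: "real mat \<Rightarrow> nat \<Rightarrow> real" where
  "row_norm F i = sqrt (\<Sum>k<dim_col F. (F $$ (i,k))^2)"

definition feasible_D ::
  "real mat \<Rightarrow> real mat \<Rightarrow> nat \<Rightarrow> real \<Rightarrow> real mat \<Rightarrow> bool" where
  "feasible_D Fu Fv d t D \<longleftrightarrow> D \<in> carrier_mat d d \<and> nuclear_norm D \<le> t \<and>
     (\<forall>i<dim_row Fu. \<forall>j<dim_row Fv.
        0 \<le> (Fu * D * transpose_mat Fv) $$ (i,j) \<and> (Fu * D * transpose_mat Fv) $$ (i,j) \<le> 1)"

definition objective :: "real \<Rightarrow> real mat \<Rightarrow> real mat \<Rightarrow> real mat \<Rightarrow> real mat \<Rightarrow> real" where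
  "objective \<rho> Fu Fv A D =
     (\<Sum>i<dim_row Fu. \<Sum>j<dim_row Fv. loss_tilde \<rho> ((Fu * D * transpose_mat Fv) $$ (i,j)) (A $$ (i,j)))"

definition optimal_D ::
  "real \<Rightarrow> real mat \<Rightarrow> real mat \<Rightarrow> nat \<Rightarrow> real \<Rightarrow> real mat \<Rightarrow> real mat \<Rightarrow> bool" where
  "optimal_D \<rho> Fu Fv d t A D \<longleftrightarrow> feasible_D Fu Fv d t D \<and>
     (\<forall>D'. feasible_D Fu Fv d t D' \<longrightarrow> objective \<rho> Fu Fv A D \<le> objective \<rho> Fu Fv A D')"

text \<open>Sampling: for each entry, Y_ij ~ Bernoulli(M_ij) and an independent reveal bit
  R_ij ~ Bernoulli(1-rho), all independent; A_ij = 1 iff Y_ij = 1 and R_ij = 1.\<close>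
definition sample_pmf :: "real mat \<Rightarrow> real \<Rightarrow> (nat \<times> nat \<Rightarrow> bool \<times> bool) pmf" where
  "sample_pmf M \<rho> = Pi_pmf ({..<dim_row M} \<times> {..<dim_col M}) (False, False)
      (\<lambda>(i,j). pair_pmf (bernoulli_pmf (M $$ (i,j))) (bernoulli_pmf (1 - \<rho>)))"

definition A_of :: "nat \<Rightarrow> nat \<Rightarrow> (nat \<times> nat \<Rightarrow> bool \<times> bool) \<Rightarrow> real mat" where
  "A_of m n \<omega> = Matrix.mat m n (\<lambda>(i,j). if fst (\<omega> (i,j)) \<and> snd (\<omega> (i,j)) then 1 else 0)"

end

theory Submission
  imports Defs "HOL-Probability.Hoeffding" "Jordan_Normal_Form.Schur_Decomposition"
begin


lemma expectation_pair_pmf_iter: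
  fixes F :: "_ \<Rightarrow> real"
  assumes fA: "finite (set_pmf A)" and fB: "finite (set_pmf B)"
  shows "measure_pmf.expectation (pair_pmf A B) F =
         measure_pmf.expectation A (\<lambda>a. measure_pmf.expectation B (\<lambda>b. F (a,b)))"
proof -
  have "measure_pmf.expectation (pair_pmf A B) F = (\<Sum>z\<in>set_pmf A \<times> set_pmf B. F z * pmf (pair_pmf A B) z)"
    by (rule integral_measure_pmf_real) (use fA fB in auto)
  also have "\<dots> = (\<Sum>a\<in>set_pmf A. \<Sum>b\<in>set_pmf B. F (a,b) * (pmf A a * pmf B b))"
    by (subst sum.cartesian_product) (rule sum.cong, auto simp: pmf_pair)
  also have "\<dots> = (\<Sum>a\<in>set_pmf A. (\<Sum>b\<in>set_pmf B. F (a,b) * pmf B b) * pmf A a)"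
    by (simp add: sum_distrib_left sum_distrib_right mult_ac)
  also have "\<dots> = measure_pmf.expectation A (\<lambda>a. measure_pmf.expectation B (\<lambda>b. F (a,b)))"
  proof -
    have "\<And>a. measure_pmf.expectation B (\<lambda>b. F (a,b)) = (\<Sum>b\<in>set_pmf B. F (a,b) * pmf B b)"
      by (rule integral_measure_pmf_real) (use fB in auto)
    moreover have "measure_pmf.expectation A (\<lambda>a. measure_pmf.expectation B (\<lambda>b. F (a,b)))
       = (\<Sum>a\<in>set_pmf A. measure_pmf.expectation B (\<lambda>b. F (a,b)) * pmf A a)"
      by (rule integral_measure_pmf_real) (use fA in auto)
    ultimately show ?thesis by simp
  qed
  finally show ?thesis .
qed

lemma finite_set_Pi_pmf:
  fixes P :: "'i \<Rightarrow> 'b::finite pmf"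
  assumes "finite I"
  shows "finite (set_pmf (Pi_pmf I dflt P))"
proof -
  have "set_pmf (Pi_pmf I dflt P) \<subseteq> PiE_dflt I dflt (\<lambda>_. UNIV)"
    using set_Pi_pmf_subset[OF assms, of dflt P] unfolding PiE_dflt_def by auto
  moreover have "finite (PiE_dflt I dflt (\<lambda>_. (UNIV::'b set)))"
    by (intro finite_PiE_dflt) (use assms in auto)
  ultimately show ?thesis by (rule finite_subset)
qed

lemma hoeffding_lemma_pmf:
  fixes p :: "'b pmf" and h :: "'b \<Rightarrow> real"
  assumes fin: "finite (set_pmf p)" and ab: "\<And>y. a \<le> h y" "\<And>y. h y \<le> b" and l: "l > 0"
  shows "measure_pmf.expectation p (\<lambda>y. exp (l * (h y - measure_pmf.expectation p h)))
          \<le> exp (l^2 * (b - a)^2 / 8)"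
proof -
  interpret interval_bounded_random_variable "measure_pmf p" h a b
    by unfold_locales (use ab in auto)
  have 1: "nn_integral (measure_pmf p) (\<lambda>x. exp (l * (h x - measure_pmf.expectation p h)))
       \<le> ennreal (exp (l^2 * (b - a)^2 / 8))"
    using Hoeffdings_lemma_nn_integral[OF l] by simp
  have "nn_integral (measure_pmf p) (\<lambda>x. ennreal (exp (l * (h x - measure_pmf.expectation p h))))
     = ennreal (measure_pmf.expectation p (\<lambda>x. exp (l * (h x - measure_pmf.expectation p h))))"
    by (rule nn_integral_eq_integral) (use fin in \<open>auto intro: integrable_measure_pmf_finite\<close>)
  with 1 show ?thesis by (simp add: ennreal_le_iff)
qed

lemma expectation_abs_le_pmf:
  fixes p :: "'b pmf" and F :: "'b \<Rightarrow> real"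
  assumes fin: "finite (set_pmf p)" and "\<And>y. y \<in> set_pmf p \<Longrightarrow> \<bar>F y\<bar> \<le> c"
  shows "\<bar>measure_pmf.expectation p F\<bar> \<le> c"
proof -
  have "\<bar>measure_pmf.expectation p F\<bar> \<le> measure_pmf.expectation p (\<lambda>y. \<bar>F y\<bar>)"
    by (rule integral_abs_bound)
  also have "\<dots> \<le> measure_pmf.expectation p (\<lambda>_. c)"
    by (intro integral_mono_AE) (use fin assms(2) in \<open>auto intro: integrable_measure_pmf_finite simp: AE_measure_pmf_iff\<close>)
  also have "\<dots> = c" by simp
  finally show ?thesis .
qed

lemma mcdiarmid_mgf:
  fixes P :: "'i \<Rightarrow> 'b::finite pmf" and f :: "('i \<Rightarrow> 'b) \<Rightarrow> real"
  assumes "finite I" and l: "l > 0"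
    and bd: "\<And>w i y. i \<in> I \<Longrightarrow> \<bar>f (w(i:=y)) - f w\<bar> \<le> c"
  shows "measure_pmf.expectation (Pi_pmf I dflt P)
           (\<lambda>w. exp (l * (f w - measure_pmf.expectation (Pi_pmf I dflt P) f)))
         \<le> exp (l^2 * c^2 * real (card I) / 8)"
  using assms(1) bd
proof (induction I arbitrary: f rule: finite_induct)
  case empty
  then show ?case by simp
next
  case (insert x I)
  let ?Q = "Pi_pmf I dflt P"
  let ?p = "P x"
  define h where "h y = measure_pmf.expectation ?Q (\<lambda>g. f (g(x:=y)))" for y
  have finQ: "finite (set_pmf ?Q)" by (rule finite_set_Pi_pmf[OF insert.hyps(1)])
  have finp: "finite (set_pmf ?p)" by simp
  have ins: "Pi_pmf (insert x I) dflt P = map_pmf (\<lambda>(y, g). g(x := y)) (pair_pmf ?p ?Q)"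
    by (rule Pi_pmf_insert[OF insert.hyps])
  have Eins: "measure_pmf.expectation (Pi_pmf (insert x I) dflt P) F
      = measure_pmf.expectation ?p (\<lambda>y. measure_pmf.expectation ?Q (\<lambda>g. F (g(x:=y))))" for F :: "_ \<Rightarrow> real"
    unfolding ins integral_map_pmf
    by (subst expectation_pair_pmf_iter[OF finp finQ]) simp
  define \<mu> where "\<mu> = measure_pmf.expectation ?p h"
  have Ef: "measure_pmf.expectation (Pi_pmf (insert x I) dflt P) f = \<mu>"
    unfolding Eins \<mu>_def h_def ..
  have IH: "measure_pmf.expectation ?Q (\<lambda>g. exp (l * (f (g(x:=y)) - h y)))
            \<le> exp (l^2 * c^2 * real (card I) / 8)" for y
  proof -
    have "\<bar>f ((g(i:=z))(x:=y)) - f (g(x:=y))\<bar> \<le> c" if "i \<in> I" for g i z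
    proof -
      have "i \<noteq> x" using that insert.hyps by auto
      hence eq: "(g(i:=z))(x:=y) = (g(x:=y))(i:=z)" by (auto simp: fun_upd_twist)
      have "\<bar>f ((g(x:=y))(i:=z)) - f (g(x:=y))\<bar> \<le> c" by (rule insert.prems) (use that in simp)
      thus ?thesis by (simp only: eq)
    qed
    from insert.IH[of "\<lambda>g. f (g(x:=y))", OF this]
    show ?thesis unfolding h_def by simp
  qed
  have hdiff: "h y \<le> h y' + c" for y y'
  proof -
    have "\<bar>h y - h y'\<bar> \<le> c"
    proof -
      have "h y - h y' = measure_pmf.expectation ?Q (\<lambda>g. f (g(x:=y)) - f (g(x:=y')))"
        unfolding h_def
        by (subst Bochner_Integration.integral_diff) (use finQ in \<open>auto intro: integrable_measure_pmf_finite\<close>)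
      also have "\<bar>\<dots>\<bar> \<le> c"
      proof (rule expectation_abs_le_pmf[OF finQ])
        fix g
        have eq: "(g(x:=y')) (x:=y) = g(x:=y)" by simp
        have "\<bar>f ((g(x:=y')) (x:=y)) - f (g(x:=y'))\<bar> \<le> c" by (rule insert.prems) simp
        thus "\<bar>f (g(x:=y)) - f (g(x:=y'))\<bar> \<le> c" by (simp only: eq)
      qed
      finally show ?thesis .
    qed
    thus ?thesis by simp
  qed
  define a where "a = Min (range h)"
  have ha: "a \<le> h y" for y unfolding a_def by (intro Min_le) auto
  have hb: "h y \<le> a + c" for y
  proof -
    have "a \<in> range h" unfolding a_def by (intro Min_in) auto
    then obtain y' where "a = h y'" by auto
    thus ?thesis using hdiff[of y y'] by simp
  qed
  have Hh: "measure_pmf.expectation ?p (\<lambda>y. exp (l * (h y - \<mu>))) \<le> exp (l^2 * c^2 / 8)"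
    using hoeffding_lemma_pmf[OF finp ha hb l] unfolding \<mu>_def by simp
  have "measure_pmf.expectation (Pi_pmf (insert x I) dflt P)
           (\<lambda>w. exp (l * (f w - measure_pmf.expectation (Pi_pmf (insert x I) dflt P) f)))
      = measure_pmf.expectation ?p (\<lambda>y. exp (l * (h y - \<mu>)) *
           measure_pmf.expectation ?Q (\<lambda>g. exp (l * (f (g(x:=y)) - h y))))"
  proof -
    have eq: "exp (l * (f (g(x:=y)) - \<mu>)) = exp (l * (h y - \<mu>)) * exp (l * (f (g(x:=y)) - h y))" for g y
      by (subst mult_exp_exp) (simp add: algebra_simps)
    show ?thesis unfolding Ef unfolding Eins by (simp add: eq)
  qed
  also have "\<dots> \<le> measure_pmf.expectation ?p (\<lambda>y. exp (l * (h y - \<mu>)) * exp (l^2 * c^2 * real (card I) / 8))"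
    by (intro integral_mono_AE)
       (use finp IH in \<open>auto intro: integrable_measure_pmf_finite mult_left_mono simp: AE_measure_pmf_iff\<close>)
  also have "\<dots> = measure_pmf.expectation ?p (\<lambda>y. exp (l * (h y - \<mu>))) * exp (l^2 * c^2 * real (card I) / 8)"
    by simp
  also have "\<dots> \<le> exp (l^2 * c^2 / 8) * exp (l^2 * c^2 * real (card I) / 8)"
    by (intro mult_right_mono Hh) auto
  also have "\<dots> = exp (l^2 * c^2 * real (card (insert x I)) / 8)"
    using insert.hyps by (simp add: mult_exp_exp[symmetric] algebra_simps add_divide_distrib)
  finally show ?case .
qed

lemma mcdiarmid:
  fixes P :: "'i \<Rightarrow> 'b::finite pmf" and f :: "('i \<Rightarrow> 'b) \<Rightarrow> real"
  assumes fin: "finite I" and N: "card I > 0" and c: "c > 0" and s: "s > 0"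
    and bd: "\<And>w i y. i \<in> I \<Longrightarrow> \<bar>f (w(i:=y)) - f w\<bar> \<le> c"
  shows "measure_pmf.prob (Pi_pmf I dflt P)
           {w. f w \<ge> measure_pmf.expectation (Pi_pmf I dflt P) f + s}
         \<le> exp (- 2 * s^2 / (c^2 * real (card I)))"
proof -
  let ?Q = "Pi_pmf I dflt P"
  let ?E = "measure_pmf.expectation ?Q f"
  define n where "n = real (card I)"
  have n: "n > 0" using N unfolding n_def by simp
  define l where "l = 4 * s / (c^2 * n)"
  have l: "l > 0" unfolding l_def using s c n by simp
  have finQ: "finite (set_pmf ?Q)" by (rule finite_set_Pi_pmf[OF fin])
  have sub: "{w. f w \<ge> ?E + s} = {w \<in> space (measure_pmf ?Q). exp (l * (f w - ?E)) \<ge> exp (l * s)}"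
    using l by (auto simp: mult_le_cancel_left_pos)
  have "measure_pmf.prob ?Q {w. f w \<ge> ?E + s}
       \<le> measure_pmf.expectation ?Q (\<lambda>w. exp (l * (f w - ?E))) / exp (l * s)"
    unfolding sub
    by (rule integral_Markov_inequality_measure[where A = "space (measure_pmf ?Q)"])
       (use finQ in \<open>auto intro: integrable_measure_pmf_finite\<close>)
  also have "\<dots> \<le> exp (l^2 * c^2 * n / 8) / exp (l * s)"
    by (intro divide_right_mono mcdiarmid_mgf[OF fin l bd, unfolded n_def[symmetric]]) auto
  also have "\<dots> = exp (l^2 * c^2 * n / 8 - l * s)" by (simp add: exp_diff)
  also have "l^2 * c^2 * n / 8 - l * s = - 2 * s^2 / (c^2 * n)"
    unfolding l_def using c n by (simp add: field_simps power2_eq_square)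
  finally show ?thesis unfolding n_def .
qed


interpretation rcpoly: map_poly_inj_idom_hom "of_real :: real \<Rightarrow> complex" ..
definition mtr :: "'a::comm_ring_1 mat \<Rightarrow> 'a" where
  "mtr A = (\<Sum>i<dim_row A. A $$ (i,i))"
lemma mtr_diag: "mtr T = sum_list (diag_mat T)"
  unfolding mtr_def diag_mat_def by (simp add: sum_list_sum_nth atLeast0LessThan)
lemma mult_mat_entry:
  assumes "i < dim_row A" "j < dim_col B" "dim_col A = dim_row B"
  shows "(A * B) $$ (i,j) = (\<Sum>k<dim_col A. A $$ (i,k) * B $$ (k,j))"
  using assms by (auto simp: scalar_prod_def atLeast0LessThan intro!: sum.cong)

lemma mtr_comm:
  assumes A: "A \<in> carrier_mat n n" and B: "B \<in> carrier_mat n n"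
  shows "mtr (A * B) = mtr (B * A)"
proof -
  have e1: "(A * B) $$ (i,i) = (\<Sum>k<n. A $$ (i,k) * B $$ (k,i))" if "i < n" for i
    using mult_mat_entry[of i A i B] that A B by simp
  have e2: "(B * A) $$ (i,i) = (\<Sum>k<n. B $$ (i,k) * A $$ (k,i))" if "i < n" for i
    using mult_mat_entry[of i B i A] that A B by simp
  have "mtr (A * B) = (\<Sum>i<n. \<Sum>k<n. A $$ (i,k) * B $$ (k,i))"
    unfolding mtr_def using A B e1 by simp
  also have "\<dots> = (\<Sum>k<n. \<Sum>i<n. B $$ (k,i) * A $$ (i,k))"
    by (subst sum.swap) (simp add: mult.commute)
  also have "\<dots> = mtr (B * A)"
    unfolding mtr_def using A B e2 by simp
  finally show ?thesis .
qed


lemma mtr_similar_wit: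
  assumes "similar_mat_wit A T P Q"
  shows "mtr A = mtr T"
proof -
  define n where "n = dim_row A"
  have c: "A \<in> carrier_mat n n" "T \<in> carrier_mat n n" "P \<in> carrier_mat n n"
     "Q \<in> carrier_mat n n" and QP: "Q * P = 1\<^sub>m n" and eq: "A = P * T * Q"
    using assms unfolding similar_mat_wit_def Let_def n_def[symmetric] by blast+
  have PT: "P * T \<in> carrier_mat n n" using c by (metis mult_carrier_mat)
  have "mtr A = mtr ((P * T) * Q)" using eq by simp
  also have "\<dots> = mtr (Q * (P * T))" by (rule mtr_comm[OF PT c(4)])
  also have "Q * (P * T) = (Q * P) * T" by (rule assoc_mult_mat[symmetric, OF c(4) c(3) c(2)])
  also have "\<dots> = T" unfolding QP by (rule left_mult_one_mat[OF c(2)])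
  finally show ?thesis .
qed



lemma sqrt_sum_list_le:
  assumes "\<forall>r\<in>set rs. r \<ge> 0"
  shows "sqrt (sum_list rs) \<le> sum_list (map sqrt rs)"
  using assms
proof (induction rs)
  case Nil then show ?case by simp
next
  case (Cons r rs)
  have r: "r \<ge> 0" and rs: "sum_list rs \<ge> 0" using Cons.prems by (auto intro: sum_list_nonneg)
  have "sqrt (r + sum_list rs) \<le> sqrt r + sqrt (sum_list rs)"
    by (rule sqrt_add_le_add_sqrt) (use r rs in auto)
  also have "\<dots> \<le> sqrt r + sum_list (map sqrt rs)" using Cons by auto
  finally show ?case by simp
qed

lemma eig_AtA:
  fixes A :: "real mat" and a :: complex
  assumes A: "A \<in> carrier_mat r c"
    and ev: "eigenvalue (map_mat complex_of_real (transpose_mat A * A)) a"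
  shows "a = complex_of_real (Re a) \<and> Re a \<ge> 0"
proof -
  define B where "B = map_mat complex_of_real (transpose_mat A * A)"
  have B: "B \<in> carrier_mat c c" using A unfolding B_def by simp
  from ev obtain v where v: "v \<in> carrier_vec c" "v \<noteq> 0\<^sub>v c" "B *\<^sub>v v = a \<cdot>\<^sub>v v"
    unfolding eigenvalue_def eigenvector_def B_def[symmetric] using B by auto
  have Bent: "B $$ (k,l) = (\<Sum>i<r. of_real (A$$(i,k)) * of_real (A$$(i,l)))" if "k<c" "l<c" for k l
    using mult_mat_entry[of k "transpose_mat A" l A] A that unfolding B_def by simp
  have Bv: "(B *\<^sub>v v) $ k = (\<Sum>l<c. B $$ (k,l) * v $ l)" if "k<c" for k
    using that B v(1) by (auto simp: scalar_prod_def atLeast0LessThan intro!: sum.cong)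
  define w where "w i = (\<Sum>l<c. of_real (A$$(i,l)) * v$l)" for i
  have cw: "cnj (w i) = (\<Sum>k<c. of_real (A$$(i,k)) * cnj (v$k))" for i
    unfolding w_def by (simp add: cnj_sum)
  have lhs1: "(\<Sum>k<c. cnj (v$k) * (B *\<^sub>v v) $ k) = a * (\<Sum>k<c. cnj (v$k) * v$k)"
  proof -
    have "(\<Sum>k<c. cnj (v$k) * (B *\<^sub>v v) $ k) = (\<Sum>k<c. cnj (v$k) * (a * v$k))"
      using v(1) by (intro sum.cong refl) (simp add: v(3))
    thus ?thesis by (simp add: sum_distrib_left mult_ac)
  qed
  have lhs2: "(\<Sum>k<c. cnj (v$k) * (B *\<^sub>v v) $ k) = (\<Sum>i<r. cnj (w i) * w i)"
  proof -
    have "(\<Sum>k<c. cnj (v$k) * (B *\<^sub>v v) $ k)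
        = (\<Sum>k<c. \<Sum>l<c. \<Sum>i<r. (of_real (A$$(i,k)) * cnj (v$k)) * (of_real (A$$(i,l)) * v$l))"
      by (intro sum.cong refl) (simp add: Bv Bent sum_distrib_left sum_distrib_right mult_ac)
    also have "\<dots> = (\<Sum>k<c. \<Sum>i<r. \<Sum>l<c. (of_real (A$$(i,k)) * cnj (v$k)) * (of_real (A$$(i,l)) * v$l))"
      by (rule sum.cong[OF refl], rule sum.swap)
    also have "\<dots> = (\<Sum>i<r. \<Sum>k<c. \<Sum>l<c. (of_real (A$$(i,k)) * cnj (v$k)) * (of_real (A$$(i,l)) * v$l))"
      by (rule sum.swap)
    also have "\<dots> = (\<Sum>i<r. cnj (w i) * w i)"
      unfolding cw w_def by (simp add: sum_product)
    finally show ?thesis .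
  qed
  have nsq: "cnj z * z = complex_of_real ((cmod z)^2)" for z :: complex
    by (metis complex_norm_square mult.commute)
  define Nv where "Nv = (\<Sum>k<c. (cmod (v$k))^2)"
  define Nw where "Nw = (\<Sum>i<r. (cmod (w i))^2)"
  have Nw: "Nw \<ge> 0" unfolding Nw_def by (intro sum_nonneg) auto
  have Nv: "Nv > 0"
  proof -
    have "\<exists>k<c. v$k \<noteq> 0"
    proof (rule ccontr)
      assume "\<not> (\<exists>k<c. v$k \<noteq> 0)"
      hence "v = 0\<^sub>v c" by (intro eq_vecI) (use v(1) in auto)
      with v(2) show False by simp
    qed
    then obtain k where k: "k < c" "v$k \<noteq> 0" by blast
    have "(cmod (v$k))^2 > 0" using k by simp
    also have "(cmod (v$k))^2 \<le> Nv" unfolding Nv_def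
      by (rule member_le_sum) (use k in auto)
    finally show ?thesis .
  qed
  have "a * complex_of_real Nv = complex_of_real Nw"
    using lhs1 lhs2 unfolding Nv_def Nw_def nsq by (simp add: of_real_sum)
  hence "a = complex_of_real (Nw / Nv)" using Nv
    by (simp add: field_simps)
  thus ?thesis using Nw Nv by simp
qed


lemma proots_lin_prod: "proots (\<Prod>x\<leftarrow>rs. [:- x, 1:]) = mset (rs :: real list)"
proof (induction rs)
  case Nil then show ?case by simp
next
  case (Cons r rs)
  have nz: "(\<Prod>x\<leftarrow>rs. [:- x, 1:]) \<noteq> (0::real poly)"
    by (auto simp: prod_list_zero_iff)
  have "proots (\<Prod>x\<leftarrow>r # rs. [:- x, 1:]) = proots ([:- r, 1:] * (\<Prod>x\<leftarrow>rs. [:- x, 1:]))"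
    by (simp only: list.map prod_list.Cons)
  also have "\<dots> = proots [:- r, 1:] + proots (\<Prod>x\<leftarrow>rs. [:- x, 1:])"
    by (rule proots_mult) (use nz in auto)
  also have "\<dots> = {#r#} + mset rs" using Cons proots_linear_factor[of "- r"] by simp
  finally show ?case by simp
qed

lemma real_char_poly_AtA:
  fixes A :: "real mat"
  assumes A: "A \<in> carrier_mat r c"
  shows "\<exists>rs. char_poly (transpose_mat A * A) = (\<Prod>x\<leftarrow>rs. [:- x, 1:]) \<and> length rs = c
              \<and> (\<forall>x\<in>set rs. x \<ge> 0)"
proof -
  define B where "B = transpose_mat A * A"
  have B: "B \<in> carrier_mat c c" using A unfolding B_def by simp
  have Bc: "map_mat complex_of_real B \<in> carrier_mat c c" using B by simp
  obtain as where cp: "char_poly (map_mat complex_of_real B) = (\<Prod>a\<leftarrow>as. [:- a, 1:])"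
    and len: "length as = c"
    using char_poly_factorized[OF Bc] by blast
  have eig: "a = complex_of_real (Re a) \<and> Re a \<ge> 0" if a: "a \<in> set as" for a
  proof -
    have "poly (char_poly (map_mat complex_of_real B)) a = 0"
      unfolding cp poly_prod_list using a
      by (auto simp: prod_list_zero_iff)
    hence "eigenvalue (map_mat complex_of_real B) a"
      using eigenvalue_root_char_poly[OF Bc] by simp
    thus ?thesis using eig_AtA[OF A] unfolding B_def by blast
  qed
  define rs where "rs = map Re as"
  have "map_poly complex_of_real (char_poly B) = char_poly (map_mat complex_of_real B)"
    by (rule of_real_hom.char_poly_hom[OF B, symmetric])
  also have "\<dots> = (\<Prod>a\<leftarrow>as. [:- a, 1:])" by (rule cp)
  also have "\<dots> = (\<Prod>x\<leftarrow>rs. [:- complex_of_real x, 1:])"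
    unfolding rs_def map_map
    by (intro arg_cong[where f=prod_list] map_cong refl) (metis eig comp_apply)
  also have "\<dots> = map_poly complex_of_real (\<Prod>x\<leftarrow>rs. [:- x, 1:])"
    unfolding rcpoly.hom_prod_list map_map o_def
    by (intro arg_cong[where f=prod_list] map_cong refl) (simp add: of_real_hom.map_poly_pCons_hom)
  finally have "char_poly B = (\<Prod>x\<leftarrow>rs. [:- x, 1:])" by (simp only: rcpoly.eq_iff)
  moreover have "length rs = c" using len unfolding rs_def by simp
  moreover have "\<forall>x\<in>set rs. x \<ge> 0" using eig unfolding rs_def by auto
  ultimately show ?thesis unfolding B_def by blast
qed

lemma frob_le_nuclear:
  fixes A :: "real mat"
  assumes A: "A \<in> carrier_mat r c"
  shows "sqrt (\<Sum>i<r. \<Sum>j<c. (A $$ (i,j))^2) \<le> nuclear_norm A"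
proof -
  define B where "B = transpose_mat A * A"
  have B: "B \<in> carrier_mat c c" using A unfolding B_def by simp
  obtain rs where cp: "char_poly B = (\<Prod>x\<leftarrow>rs. [:- x, 1:])" and nn: "\<forall>x\<in>set rs. x \<ge> 0"
    using real_char_poly_AtA[OF A] unfolding B_def by blast
  have nuc: "nuclear_norm A = sum_list (map sqrt rs)"
    unfolding nuclear_norm_def B_def[symmetric] cp proots_lin_prod
    by (simp only: mset_map[symmetric] sum_mset_sum_list)
  obtain T P Q where sd: "schur_decomposition B rs = (T,P,Q)"
    by (cases "schur_decomposition B rs") auto
  from schur_decomposition[OF B cp sd]
  have sim: "similar_mat_wit B T P Q" and dT: "diag_mat T = rs" by auto
  have "mtr B = sum_list rs" using mtr_similar_wit[OF sim] mtr_diag[of T] dT by simp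
  moreover have "mtr B = (\<Sum>i<r. \<Sum>j<c. (A $$ (i,j))^2)"
  proof -
    have Bjj: "B $$ (j,j) = (\<Sum>i<r. A $$ (i,j) * A $$ (i,j))" if "j < c" for j
      using mult_mat_entry[of j "transpose_mat A" j A] A that by (simp add: B_def)
    have "mtr B = (\<Sum>j<c. \<Sum>i<r. A $$ (i,j) * A $$ (i,j))"
      unfolding mtr_def using B Bjj by simp
    also have "\<dots> = (\<Sum>i<r. \<Sum>j<c. (A $$ (i,j))^2)"
      by (subst sum.swap) (simp add: power2_eq_square)
    finally show ?thesis .
  qed
  ultimately show ?thesis using nuc sqrt_sum_list_le[OF nn] by simp
qed



lemma char_poly_eval:
  fixes A :: "real mat"
  assumes A: "A \<in> carrier_mat n n"
  shows "poly (char_poly A) x = Determinant.det (x \<cdot>\<^sub>m 1\<^sub>m n - A)"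
proof -
  have "- char_matrix A x = x \<cdot>\<^sub>m 1\<^sub>m n - A"
    unfolding char_matrix_def using A by (intro eq_matI) auto
  thus ?thesis using char_poly_matrix[OF A] by simp
qed

lemma det_conj_identity:
  fixes F K :: "real mat"
  assumes F: "F \<in> carrier_mat n d" and K: "K \<in> carrier_mat d d"
    and FF: "transpose_mat F * F = 1\<^sub>m d"
  shows "x^d * Determinant.det (x \<cdot>\<^sub>m 1\<^sub>m n - F * K * transpose_mat F) = x^n * Determinant.det (x \<cdot>\<^sub>m 1\<^sub>m d - K)"
proof -
  have Ft: "transpose_mat F \<in> carrier_mat d n" using F by simp
  have KFt: "K * transpose_mat F \<in> carrier_mat d n" using K Ft by simp
  have FKFt: "F * K * transpose_mat F \<in> carrier_mat n n" using F K Ft by simp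
  define N1 where "N1 = four_block_mat (1\<^sub>m d) (0\<^sub>m d n) (- F) (x \<cdot>\<^sub>m 1\<^sub>m n)"
  define N2 where "N2 = four_block_mat (x \<cdot>\<^sub>m 1\<^sub>m d) (K * transpose_mat F) F (1\<^sub>m n)"
  define U where "U = four_block_mat (1\<^sub>m d) (K * transpose_mat F) (0\<^sub>m n d) (1\<^sub>m n)"
  define L where "L = four_block_mat (x \<cdot>\<^sub>m 1\<^sub>m d - K) (0\<^sub>m d n) F (1\<^sub>m n)"
  have cN1: "N1 \<in> carrier_mat (d+n) (d+n)" unfolding N1_def by simp
  have cN2: "N2 \<in> carrier_mat (d+n) (d+n)" unfolding N2_def by simp
  have cU: "U \<in> carrier_mat (d+n) (d+n)" unfolding U_def by simp
  have cL: "L \<in> carrier_mat (d+n) (d+n)" unfolding L_def using K by (intro four_block_carrier_mat) auto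
  have dN1: "Determinant.det N1 = x^n" unfolding N1_def
    by (subst det_four_block_mat_upper_right_zero[of _ d _ n]) (use F in auto)
  have dU: "Determinant.det U = 1" unfolding U_def
    by (subst det_four_block_mat_lower_left_zero[of _ d _ n]) (use KFt in auto)
  have dL: "Determinant.det L = Determinant.det (x \<cdot>\<^sub>m 1\<^sub>m d - K)" unfolding L_def
    by (subst det_four_block_mat_upper_right_zero[of _ d _ n]) (use F K in auto)
  have UL: "U * L = N2"
  proof -
    have "U * L = four_block_mat (1\<^sub>m d * (x \<cdot>\<^sub>m 1\<^sub>m d - K) + K * transpose_mat F * F)
        (1\<^sub>m d * 0\<^sub>m d n + K * transpose_mat F * 1\<^sub>m n)
        (0\<^sub>m n d * (x \<cdot>\<^sub>m 1\<^sub>m d - K) + 1\<^sub>m n * F) (0\<^sub>m n d * 0\<^sub>m d n + 1\<^sub>m n * 1\<^sub>m n)"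
      unfolding U_def L_def
      by (rule mult_four_block_mat) (use F K KFt in auto)
    also have "K * transpose_mat F * F = K"
      using assoc_mult_mat[OF K Ft F] FF K by simp
    also have "1\<^sub>m d * (x \<cdot>\<^sub>m 1\<^sub>m d - K) + K = x \<cdot>\<^sub>m 1\<^sub>m d"
      using K by (intro eq_matI) auto
    also have "1\<^sub>m d * 0\<^sub>m d n + K * transpose_mat F * 1\<^sub>m n = K * transpose_mat F"
      using KFt right_mult_one_mat[OF KFt] by simp
    also have "0\<^sub>m n d * (x \<cdot>\<^sub>m 1\<^sub>m d - K) + 1\<^sub>m n * F = F"
      using F K by simp
    also have "0\<^sub>m n d * 0\<^sub>m d n + 1\<^sub>m n * 1\<^sub>m n = (1\<^sub>m n :: real mat)"
      by simp
    finally show ?thesis unfolding N2_def .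
  qed
  have dN2: "Determinant.det N2 = Determinant.det (x \<cdot>\<^sub>m 1\<^sub>m d - K)"
    using det_mult[OF cU cL] UL dU dL by simp
  have N12: "N1 * N2 = four_block_mat (x \<cdot>\<^sub>m 1\<^sub>m d) (K * transpose_mat F) (0\<^sub>m n d)
                 (x \<cdot>\<^sub>m 1\<^sub>m n - F * K * transpose_mat F)"
  proof -
    have "N1 * N2 = four_block_mat (1\<^sub>m d * (x \<cdot>\<^sub>m 1\<^sub>m d) + 0\<^sub>m d n * F)
        (1\<^sub>m d * (K * transpose_mat F) + 0\<^sub>m d n * 1\<^sub>m n)
        (- F * (x \<cdot>\<^sub>m 1\<^sub>m d) + (x \<cdot>\<^sub>m 1\<^sub>m n) * F) (- F * (K * transpose_mat F) + (x \<cdot>\<^sub>m 1\<^sub>m n) * 1\<^sub>m n)"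
      unfolding N1_def N2_def
      by (rule mult_four_block_mat) (use F K KFt in auto)
    also have "1\<^sub>m d * (x \<cdot>\<^sub>m 1\<^sub>m d) + 0\<^sub>m d n * F = x \<cdot>\<^sub>m 1\<^sub>m d" using F by simp
    also have "1\<^sub>m d * (K * transpose_mat F) + 0\<^sub>m d n * 1\<^sub>m n = K * transpose_mat F"
      using KFt by (simp add: left_mult_one_mat[OF KFt] right_add_zero_mat[OF KFt])
    also have "- F * (x \<cdot>\<^sub>m 1\<^sub>m d) + (x \<cdot>\<^sub>m 1\<^sub>m n) * F = 0\<^sub>m n d"
    proof -
      have "- F * (x \<cdot>\<^sub>m 1\<^sub>m d) = - (x \<cdot>\<^sub>m F)"
        using mult_smult_distrib[OF F, of "1\<^sub>m d" d x] F by simp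
      moreover have "(x \<cdot>\<^sub>m 1\<^sub>m n) * F = x \<cdot>\<^sub>m F"
        using mult_smult_assoc_mat[of "1\<^sub>m n" n n F d x] F by simp
      ultimately show ?thesis using F by simp
    qed
    also have "- F * (K * transpose_mat F) + (x \<cdot>\<^sub>m 1\<^sub>m n) * 1\<^sub>m n = x \<cdot>\<^sub>m 1\<^sub>m n - F * K * transpose_mat F"
      using F K Ft FKFt by (intro eq_matI) (auto simp: assoc_mult_mat[OF F K Ft])
    finally show ?thesis .
  qed
  have "Determinant.det (N1 * N2) = x^d * Determinant.det (x \<cdot>\<^sub>m 1\<^sub>m n - F * K * transpose_mat F)"
    unfolding N12
    by (subst det_four_block_mat_lower_left_zero[of _ d _ n]) (use FKFt KFt in \<open>auto intro: minus_carrier_mat\<close>)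
  moreover have "Determinant.det (N1 * N2) = x^n * Determinant.det (x \<cdot>\<^sub>m 1\<^sub>m d - K)"
    using det_mult[OF cN1 cN2] dN1 dN2 by simp
  ultimately show ?thesis by simp
qed

lemma proots_monom_mult:
  fixes p :: "real poly"
  assumes "p \<noteq> 0"
  shows "proots (monom 1 k * p) = repeat_mset k {#0#} + proots p"
proof -
  have m: "monom 1 k = ([:0, 1:] :: real poly) ^ k"
    by (simp add: monom_altdef)
  have "proots (monom 1 k * p) = proots (monom 1 k :: real poly) + proots p"
    by (rule proots_mult) (use assms in auto)
  also have "proots (monom 1 k :: real poly) = repeat_mset k {#0#}"
    unfolding m proots_power using proots_linear_factor[of "0::real"] by simp
  finally show ?thesis .
qed

lemma sum_sqrt_repeat0: "sum_mset (image_mset sqrt (repeat_mset k {#0::real#})) = 0"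
  by (induction k) auto

lemma char_poly_conj:
  fixes F K :: "real mat"
  assumes F: "F \<in> carrier_mat n d" and K: "K \<in> carrier_mat d d"
    and FF: "transpose_mat F * F = 1\<^sub>m d"
  shows "sum_mset (image_mset sqrt (proots (char_poly (F * K * transpose_mat F))))
       = sum_mset (image_mset sqrt (proots (char_poly K)))"
proof -
  have FKFt: "F * K * transpose_mat F \<in> carrier_mat n n" using F K by simp
  have eq: "monom 1 d * char_poly (F * K * transpose_mat F) = monom 1 n * char_poly K"
  proof (rule poly_eq_poly_eq_iff[THEN iffD1], rule ext)
    fix x :: real
    show "poly (monom 1 d * char_poly (F * K * transpose_mat F)) x = poly (monom 1 n * char_poly K) x"
      using det_conj_identity[OF F K FF, of x] char_poly_eval[OF FKFt, of x] char_poly_eval[OF K, of x]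
      by (simp add: poly_monom)
  qed
  have nz1: "char_poly (F * K * transpose_mat F) \<noteq> 0"
    using degree_monic_char_poly[OF FKFt] by auto
  have nz2: "char_poly K \<noteq> 0"
    using degree_monic_char_poly[OF K] by auto
  from arg_cong[OF eq, of proots]
  have "repeat_mset d {#0#} + proots (char_poly (F * K * transpose_mat F))
      = repeat_mset n {#0#} + proots (char_poly K)"
    unfolding proots_monom_mult[OF nz1] proots_monom_mult[OF nz2] .
  from arg_cong[OF this, of "\<lambda>A. sum_mset (image_mset sqrt A)"]
  show ?thesis by (simp add: sum_sqrt_repeat0)
qed

lemma orth_cancel:
  fixes F Y :: "real mat"
  assumes F: "F \<in> carrier_mat n d" and FF: "transpose_mat F * F = 1\<^sub>m d" and Y: "Y \<in> carrier_mat d k"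
  shows "transpose_mat F * (F * Y) = Y"
proof -
  have "transpose_mat F * (F * Y) = (transpose_mat F * F) * Y"
    by (rule assoc_mult_mat[symmetric]) (use F Y in auto)
  also have "\<dots> = Y" using FF Y by simp
  finally show ?thesis .
qed

lemma conj_AtA:
  fixes Fu Fv D :: "real mat"
  assumes Fu: "Fu \<in> carrier_mat m d" and Fv: "Fv \<in> carrier_mat n d" and D: "D \<in> carrier_mat d d"
    and FuFu: "transpose_mat Fu * Fu = 1\<^sub>m d"
  shows "transpose_mat (Fu * D * transpose_mat Fv) * (Fu * D * transpose_mat Fv)
       = Fv * (transpose_mat D * D) * transpose_mat Fv"
proof -
  have t: "transpose_mat (Fu * D * transpose_mat Fv) = Fv * (transpose_mat D * transpose_mat Fu)"
  proof -
    have "transpose_mat ((Fu * D) * transpose_mat Fv) = transpose_mat (transpose_mat Fv) * transpose_mat (Fu * D)"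
      by (rule transpose_mult) (use Fu D Fv in auto)
    also have "transpose_mat (Fu * D) = transpose_mat D * transpose_mat Fu"
      by (rule transpose_mult) (use Fu D in auto)
    finally show ?thesis by simp
  qed
  have c: "transpose_mat D * D * transpose_mat Fv \<in> carrier_mat d n" using D Fv by simp
  have Dt: "transpose_mat D \<in> carrier_mat d d" using D by simp
  have Fut: "transpose_mat Fu \<in> carrier_mat d m" using Fu by simp
  have Fvt: "transpose_mat Fv \<in> carrier_mat d n" using Fv by simp
  have DFvt: "D * transpose_mat Fv \<in> carrier_mat d n" using D Fvt by simp
  have FuDFvt: "Fu * (D * transpose_mat Fv) \<in> carrier_mat m n" using Fu DFvt by simp
  have e0: "Fu * D * transpose_mat Fv = Fu * (D * transpose_mat Fv)"
    by (rule assoc_mult_mat[OF Fu D Fvt])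
  have "Fv * (transpose_mat D * transpose_mat Fu) * (Fu * (D * transpose_mat Fv))
      = Fv * ((transpose_mat D * transpose_mat Fu) * (Fu * (D * transpose_mat Fv)))"
    by (rule assoc_mult_mat[OF Fv _ FuDFvt]) (use Dt Fut in simp)
  also have "(transpose_mat D * transpose_mat Fu) * (Fu * (D * transpose_mat Fv))
      = transpose_mat D * (transpose_mat Fu * (Fu * (D * transpose_mat Fv)))"
    by (rule assoc_mult_mat[OF Dt Fut FuDFvt])
  also have "transpose_mat Fu * (Fu * (D * transpose_mat Fv)) = D * transpose_mat Fv"
    by (rule orth_cancel[OF Fu FuFu DFvt])
  also have "transpose_mat D * (D * transpose_mat Fv) = (transpose_mat D * D) * transpose_mat Fv"
    by (rule assoc_mult_mat[symmetric, OF Dt D Fvt])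
  also have "Fv * ((transpose_mat D * D) * transpose_mat Fv) = Fv * (transpose_mat D * D) * transpose_mat Fv"
    by (rule assoc_mult_mat[symmetric, OF Fv _ Fvt]) (use Dt D in simp)
  finally have "Fv * (transpose_mat D * transpose_mat Fu) * (Fu * (D * transpose_mat Fv))
      = Fv * (transpose_mat D * D) * transpose_mat Fv" .
  thus ?thesis unfolding t unfolding e0 .
qed

lemma nuclear_conj:
  fixes Fu Fv D :: "real mat"
  assumes Fu: "Fu \<in> carrier_mat m d" and Fv: "Fv \<in> carrier_mat n d" and D: "D \<in> carrier_mat d d"
    and FuFu: "transpose_mat Fu * Fu = 1\<^sub>m d" and FvFv: "transpose_mat Fv * Fv = 1\<^sub>m d"
  shows "nuclear_norm (Fu * D * transpose_mat Fv) = nuclear_norm D"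
  unfolding nuclear_norm_def conj_AtA[OF Fu Fv D FuFu]
  by (rule char_poly_conj[OF Fv _ FvFv]) (use D in simp)



lemma mtr_comm_rect:
  assumes A: "A \<in> carrier_mat n k" and B: "B \<in> carrier_mat k n"
  shows "mtr (A * B) = mtr (B * A)"
proof -
  have e1: "(A * B) $$ (i,i) = (\<Sum>j<k. A $$ (i,j) * B $$ (j,i))" if "i < n" for i
    using mult_mat_entry[of i A i B] that A B by simp
  have e2: "(B * A) $$ (j,j) = (\<Sum>i<n. B $$ (j,i) * A $$ (i,j))" if "j < k" for j
    using mult_mat_entry[of j B j A] that A B by simp
  have "mtr (A * B) = (\<Sum>i<n. \<Sum>j<k. A $$ (i,j) * B $$ (j,i))"
    unfolding mtr_def using A B e1 by simp
  also have "\<dots> = (\<Sum>j<k. \<Sum>i<n. B $$ (j,i) * A $$ (i,j))"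
    by (subst sum.swap) (simp add: mult.commute)
  also have "\<dots> = mtr (B * A)"
    unfolding mtr_def using A B e2 by simp
  finally show ?thesis .
qed

lemma frob_mtr:
  fixes A :: "real mat"
  assumes A: "A \<in> carrier_mat r c"
  shows "(\<Sum>i<r. \<Sum>j<c. (A $$ (i,j))^2) = mtr (transpose_mat A * A)"
proof -
  have Bjj: "(transpose_mat A * A) $$ (j,j) = (\<Sum>i<r. A $$ (i,j) * A $$ (i,j))" if "j < c" for j
    using mult_mat_entry[of j "transpose_mat A" j A] A that by simp
  have "mtr (transpose_mat A * A) = (\<Sum>j<c. \<Sum>i<r. A $$ (i,j) * A $$ (i,j))"
    unfolding mtr_def using A Bjj by simp
  also have "\<dots> = (\<Sum>i<r. \<Sum>j<c. (A $$ (i,j))^2)"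
    by (subst sum.swap) (simp add: power2_eq_square)
  finally show ?thesis by simp
qed

lemma frob_conj:
  fixes Fu Fv E :: "real mat"
  assumes Fu: "Fu \<in> carrier_mat m d" and Fv: "Fv \<in> carrier_mat n d" and E: "E \<in> carrier_mat d d"
    and FuFu: "transpose_mat Fu * Fu = 1\<^sub>m d" and FvFv: "transpose_mat Fv * Fv = 1\<^sub>m d"
  shows "(\<Sum>i<m. \<Sum>j<n. ((Fu * E * transpose_mat Fv) $$ (i,j))^2) = (\<Sum>a<d. \<Sum>b<d. (E $$ (a,b))^2)"
proof -
  have X: "Fu * E * transpose_mat Fv \<in> carrier_mat m n" using Fu E Fv by simp
  have K: "transpose_mat E * E \<in> carrier_mat d d" using E by simp
  have FvK: "Fv * (transpose_mat E * E) \<in> carrier_mat n d" using Fv K by simp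
  have Fvt: "transpose_mat Fv \<in> carrier_mat d n" using Fv by simp
  have "(\<Sum>i<m. \<Sum>j<n. ((Fu * E * transpose_mat Fv) $$ (i,j))^2)
      = mtr (Fv * (transpose_mat E * E) * transpose_mat Fv)"
    unfolding frob_mtr[OF X] conj_AtA[OF Fu Fv E FuFu] ..
  also have "\<dots> = mtr (transpose_mat Fv * (Fv * (transpose_mat E * E)))"
    by (rule mtr_comm_rect[OF FvK Fvt])
  also have "transpose_mat Fv * (Fv * (transpose_mat E * E)) = transpose_mat E * E"
    by (rule orth_cancel[OF Fv FvFv K])
  also have "mtr (transpose_mat E * E) = (\<Sum>a<d. \<Sum>b<d. (E $$ (a,b))^2)"
    by (rule frob_mtr[OF E, symmetric])
  finally show ?thesis .
qed

lemma conj_entry: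
  fixes Fu Fv E :: "real mat"
  assumes Fu: "Fu \<in> carrier_mat m d" and Fv: "Fv \<in> carrier_mat n d" and E: "E \<in> carrier_mat d d"
    and i: "i < m" and j: "j < n"
  shows "(Fu * E * transpose_mat Fv) $$ (i,j) = (\<Sum>a<d. \<Sum>b<d. Fu $$ (i,a) * E $$ (a,b) * Fv $$ (j,b))"
proof -
  have FE: "Fu * E \<in> carrier_mat m d" using Fu E by simp
  have mm: "(Fu * E * transpose_mat Fv) $$ (i,j) = (\<Sum>b<dim_col (Fu * E). (Fu * E) $$ (i,b) * transpose_mat Fv $$ (b,j))"
    by (rule mult_mat_entry) (use FE Fv i j in auto)
  have "(Fu * E * transpose_mat Fv) $$ (i,j) = (\<Sum>b<d. (Fu * E) $$ (i,b) * Fv $$ (j,b))"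
    unfolding mm using FE Fv j by (intro sum.cong) auto
  also have "\<dots> = (\<Sum>b<d. (\<Sum>a<d. Fu $$ (i,a) * E $$ (a,b)) * Fv $$ (j,b))"
    by (intro sum.cong refl) (use mult_mat_entry[of i Fu _ E] Fu E i in simp)
  also have "\<dots> = (\<Sum>a<d. \<Sum>b<d. Fu $$ (i,a) * E $$ (a,b) * Fv $$ (j,b))"
    by (simp add: sum_distrib_right) (rule sum.swap)
  finally show ?thesis .
qed


lemma expectation_Pi_insert:
  fixes P :: "'i \<Rightarrow> 'b::finite pmf" and F :: "('i \<Rightarrow> 'b) \<Rightarrow> real"
  assumes "finite I" "x \<notin> I"
  shows "measure_pmf.expectation (Pi_pmf (insert x I) dflt P) F
      = measure_pmf.expectation (P x) (\<lambda>y. measure_pmf.expectation (Pi_pmf I dflt P) (\<lambda>g. F (g(x:=y))))"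
proof -
  have finQ: "finite (set_pmf (Pi_pmf I dflt P))" by (rule finite_set_Pi_pmf[OF assms(1)])
  show ?thesis
    unfolding Pi_pmf_insert[OF assms] integral_map_pmf
    by (subst expectation_pair_pmf_iter[OF _ finQ]) simp_all
qed

lemma marginal1:
  fixes P :: "'i \<Rightarrow> 'b::finite pmf" and g :: "'b \<Rightarrow> real"
  assumes "finite I" "k \<in> I"
  shows "measure_pmf.expectation (Pi_pmf I dflt P) (\<lambda>w. g (w k)) = measure_pmf.expectation (P k) g"
proof -
  have "measure_pmf.expectation (Pi_pmf I dflt P) (\<lambda>w. g (w k))
      = measure_pmf.expectation (map_pmf (\<lambda>w. w k) (Pi_pmf I dflt P)) g"
    by simp
  also have "map_pmf (\<lambda>w. w k) (Pi_pmf I dflt P) = P k"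
    using Pi_pmf_component[OF assms(1), of k dflt P] assms(2) by simp
  finally show ?thesis .
qed

lemma marginal2:
  fixes P :: "'i \<Rightarrow> 'b::finite pmf" and g :: "'b \<Rightarrow> 'b \<Rightarrow> real"
  assumes fin: "finite I" and k1: "k1 \<in> I" and k2: "k2 \<in> I" and ne: "k1 \<noteq> k2"
  shows "measure_pmf.expectation (Pi_pmf I dflt P) (\<lambda>w. g (w k1) (w k2))
       = measure_pmf.expectation (P k1) (\<lambda>y. measure_pmf.expectation (P k2) (\<lambda>z. g y z))"
proof -
  define I1 where "I1 = I - {k1}"
  have I: "I = insert k1 I1" using k1 unfolding I1_def by auto
  have fin1: "finite I1" "k1 \<notin> I1" "k2 \<in> I1" using fin k2 ne unfolding I1_def by auto
  have "measure_pmf.expectation (Pi_pmf I dflt P) (\<lambda>w. g (w k1) (w k2))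
      = measure_pmf.expectation (P k1) (\<lambda>y. measure_pmf.expectation (Pi_pmf I1 dflt P) (\<lambda>h. g y (h k2)))"
    unfolding I by (subst expectation_Pi_insert[OF fin1(1,2)]) (use ne in simp)
  also have "\<dots> = measure_pmf.expectation (P k1) (\<lambda>y. measure_pmf.expectation (P k2) (\<lambda>z. g y z))"
    using marginal1[OF fin1(1) fin1(3), of dflt P] by simp
  finally show ?thesis .
qed

lemma expectation_sum_pmf:
  fixes Q :: "'a pmf" and F :: "'k \<Rightarrow> 'a \<Rightarrow> real"
  assumes "finite (set_pmf Q)"
  shows "measure_pmf.expectation Q (\<lambda>w. \<Sum>k\<in>K. F k w) = (\<Sum>k\<in>K. measure_pmf.expectation Q (F k))"
  by (rule Bochner_Integration.integral_sum) (use assms in \<open>auto intro: integrable_measure_pmf_finite\<close>)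

lemma second_moment_indep:
  fixes P :: "'i \<Rightarrow> 'b::finite pmf" and \<alpha> :: "'i \<Rightarrow> 'b \<Rightarrow> real" and c :: "'i \<Rightarrow> real"
  assumes fin: "finite I" and E0: "\<And>k. k \<in> I \<Longrightarrow> measure_pmf.expectation (P k) (\<alpha> k) = 0"
  shows "measure_pmf.expectation (Pi_pmf I dflt P) (\<lambda>w. (\<Sum>k\<in>I. c k * \<alpha> k (w k))^2)
       = (\<Sum>k\<in>I. (c k)^2 * measure_pmf.expectation (P k) (\<lambda>y. (\<alpha> k y)^2))"
proof -
  let ?Q = "Pi_pmf I dflt P"
  have finQ: "finite (set_pmf ?Q)" by (rule finite_set_Pi_pmf[OF fin])
  have sq: "(\<Sum>k\<in>I. c k * \<alpha> k (w k))^2 = (\<Sum>k\<in>I. \<Sum>l\<in>I. (c k * \<alpha> k (w k)) * (c l * \<alpha> l (w l)))" for w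
    by (simp add: power2_eq_square sum_product)
  have cross: "measure_pmf.expectation ?Q (\<lambda>w. (c k * \<alpha> k (w k)) * (c l * \<alpha> l (w l)))
        = (if k = l then (c k)^2 * measure_pmf.expectation (P k) (\<lambda>y. (\<alpha> k y)^2) else 0)"
    if k: "k \<in> I" and l: "l \<in> I" for k l
  proof (cases "k = l")
    case True
    have "measure_pmf.expectation ?Q (\<lambda>w. (c k * \<alpha> k (w k)) * (c l * \<alpha> l (w l)))
        = measure_pmf.expectation (P k) (\<lambda>y. (c k)^2 * (\<alpha> k y)^2)"
      using marginal1[OF fin k, of dflt P "\<lambda>y. (c k)^2 * (\<alpha> k y)^2"] True
      by (simp add: power2_eq_square mult_ac)
    thus ?thesis using True by simp
  next
    case False
    have "measure_pmf.expectation ?Q (\<lambda>w. (c k * \<alpha> k (w k)) * (c l * \<alpha> l (w l)))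
        = measure_pmf.expectation (P k) (\<lambda>y. measure_pmf.expectation (P l) (\<lambda>z. (c k * \<alpha> k y) * (c l * \<alpha> l z)))"
      by (rule marginal2[OF fin k l False])
    also have "\<dots> = 0" using E0[OF l] by simp
    finally show ?thesis using False by simp
  qed
  have "measure_pmf.expectation ?Q (\<lambda>w. (\<Sum>k\<in>I. c k * \<alpha> k (w k))^2)
      = (\<Sum>k\<in>I. \<Sum>l\<in>I. measure_pmf.expectation ?Q (\<lambda>w. (c k * \<alpha> k (w k)) * (c l * \<alpha> l (w l))))"
    unfolding sq by (simp add: expectation_sum_pmf[OF finQ])
  also have "\<dots> = (\<Sum>k\<in>I. \<Sum>l\<in>I. (if k = l then (c k)^2 * measure_pmf.expectation (P k) (\<lambda>y. (\<alpha> k y)^2) else 0))"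
    by (intro sum.cong refl) (simp add: cross)
  also have "\<dots> = (\<Sum>k\<in>I. (c k)^2 * measure_pmf.expectation (P k) (\<lambda>y. (\<alpha> k y)^2))"
    using fin by (simp add: sum.delta)
  finally show ?thesis .
qed

lemma expectation_le_sqrt_second:
  fixes Q :: "'a pmf" and Y :: "'a \<Rightarrow> real"
  assumes "finite (set_pmf Q)"
  shows "measure_pmf.expectation Q Y \<le> sqrt (measure_pmf.expectation Q (\<lambda>w. (Y w)^2))"
proof -
  let ?c = "measure_pmf.expectation Q Y"
  have int: "integrable (measure_pmf Q) f" for f :: "'a \<Rightarrow> real"
    using assms by (rule integrable_measure_pmf_finite)
  have "0 \<le> measure_pmf.expectation Q (\<lambda>w. (Y w - ?c)^2)" by simp
  also have "measure_pmf.expectation Q (\<lambda>w. (Y w - ?c)^2)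
      = measure_pmf.expectation Q (\<lambda>w. (Y w)^2) - 2 * ?c * ?c + ?c^2"
  proof -
    have "(\<lambda>w. (Y w - ?c)^2) = (\<lambda>w. (Y w)^2 - 2 * ?c * Y w + ?c^2)"
      by (auto simp: power2_eq_square algebra_simps)
    thus ?thesis by (simp add: int)
  qed
  finally have "?c^2 \<le> measure_pmf.expectation Q (\<lambda>w. (Y w)^2)" by (simp add: power2_eq_square)
  thus ?thesis by (metis abs_le_D1 real_le_rsqrt real_sqrt_abs real_sqrt_le_iff)
qed

lemma bern_pair_expect:
  fixes q r :: real and h :: "bool \<times> bool \<Rightarrow> real"
  assumes "0 \<le> q" "q \<le> 1" "0 \<le> r" "r \<le> 1"
  shows "measure_pmf.expectation (pair_pmf (bernoulli_pmf q) (bernoulli_pmf r)) h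
     = q * r * h (True, True) + q * (1 - r) * h (True, False) + (1 - q) * r * h (False, True)
       + (1 - q) * (1 - r) * h (False, False)"
  by (subst expectation_pair_pmf_iter) (use assms in \<open>auto simp: algebra_simps\<close>)


lemma loss_identity:
  assumes a: "a = 0 \<or> a = 1" and r: "\<rho> < 1"
  shows "(m - x)^2 = (loss_tilde \<rho> x a - loss_tilde \<rho> m a) + 2 / (1 - \<rho>) * ((a - m * (1 - \<rho>)) * (x - m))"
proof -
  have r0: "1 - \<rho> \<noteq> 0" using r by simp
  define q where "q = 1 / (1 - \<rho>)"
  have q: "q * (1 - \<rho>) = 1" unfolding q_def using r0 by simp
  have t2: "2 / (1 - \<rho>) = 2 * q" unfolding q_def by simp
  have l: "loss_tilde \<rho> z a = z^2 + a * q * (1 - 2 * z)" for z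
  proof -
    have "((z - 1)^2 - \<rho> * z^2) / (1 - \<rho>) = z^2 + q * (1 - 2 * z)"
      unfolding q_def using r0 by (simp add: field_simps power2_eq_square)
    thus ?thesis using a unfolding loss_tilde_def by auto
  qed
  have "(loss_tilde \<rho> x a - loss_tilde \<rho> m a) + 2 / (1 - \<rho>) * ((a - m * (1 - \<rho>)) * (x - m)) - (m - x)^2
      = -2 * m * (x - m) * (q * (1 - \<rho>) - 1)"
    unfolding l t2 by (simp add: algebra_simps power2_eq_square)
  thus ?thesis using q by simp
qed

lemma alg_final:
  fixes a g x t L u v :: real
  assumes "a > 0" "g > 0"
  shows "(1 / (a * a)) * (2 / (g * g) * (3 * a * x + 2 * t * L * (a * u * v) * g))
       = 6 * x / (a * (g * g)) + 4 * t * L / (a * g) * u * v"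
  using assms by (simp add: field_simps)

lemma ln_facts: "ln (2::real) \<ge> 1/2" "ln (4::real) \<ge> 1"
proof -
  have e: "exp (1::real) \<le> 4" using exp_le by simp
  show "ln (4::real) \<ge> 1" using e by (subst ln_ge_iff) auto
  have "exp (1/2::real) \<le> 2"
  proof -
    have "exp (1/2::real) ^ 2 = exp 1" by (simp add: exp_double[symmetric])
    also have "\<dots> \<le> 2^2" using e by simp
    finally show ?thesis by (rule power2_le_imp_le) simp
  qed
  thus "ln (2::real) \<ge> 1/2" by (subst ln_ge_iff) auto
qed

theorem theorem6:
  fixes M Fu Fv :: "real mat" and m n d :: nat and t \<rho> \<delta> :: real
    and Dhat :: "real mat \<Rightarrow> real mat"
  assumes "m > 0" and "n > 0" and "d > 0"
    and "M \<in> carrier_mat m n"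
    and "\<forall>i<m. \<forall>j<n. 0 \<le> M $$ (i,j) \<and> M $$ (i,j) \<le> 1"
    and "nuclear_norm M \<le> t"
    and "0 \<le> \<rho>" and "\<rho> < 1"
    and "0 < \<delta>" and "\<delta> < 1"
    and "Fu \<in> carrier_mat m d" and "Fv \<in> carrier_mat n d"
    and "transpose_mat Fu * Fu = 1\<^sub>m d" and "transpose_mat Fv * Fv = 1\<^sub>m d"
    and "M = Fu * transpose_mat Fu * M * Fv * transpose_mat Fv"
    and "\<forall>A \<in> carrier_mat m n. (\<forall>i<m. \<forall>j<n. A $$ (i,j) \<in> {0,1}) \<longrightarrow>
           optimal_D \<rho> Fu Fv d t A (Dhat A)"
  shows "measure_pmf.prob (sample_pmf M \<rho>)
           {\<omega>. let Mhat = Fu * Dhat (A_of m n \<omega>) * transpose_mat Fv in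
              (1 / (real m * real n)) * (\<Sum>i<m. \<Sum>j<n. (M $$ (i,j) - Mhat $$ (i,j))^2)
              \<le> 6 * sqrt (ln (2 / \<delta>)) / (sqrt (real m * real n) * (1 - \<rho>))
                + 4 * t * sqrt (ln (2 * real d)) / (sqrt (real m * real n) * sqrt (1 - \<rho>))
                  * (MAX i\<in>{..<m}. row_norm Fu i) * (MAX j\<in>{..<n}. row_norm Fv j)}
         \<ge> 1 - \<delta>"
proof -
  note m0 = assms(1) and n0 = assms(2) and d0 = assms(3) and Mc = assms(4) and M01 = assms(5)
    and Mt = assms(6) and r0 = assms(7) and r1 = assms(8) and dl0 = assms(9) and dl1 = assms(10)
    and Fu = assms(11) and Fv = assms(12) and FuFu = assms(13) and FvFv = assms(14)
    and Mproj = assms(15) and opt = assms(16)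
  define N where "N = real m * real n"
  have N0: "N > 0" unfolding N_def using m0 n0 by simp
  define I where "I = {..<m} \<times> {..<n}"
  have finI: "finite I" unfolding I_def by simp
  have cardI: "card I = m * n" unfolding I_def by (simp add: card_cartesian_product)
  define P where "P = (\<lambda>(i,j). pair_pmf (bernoulli_pmf (M $$ (i,j))) (bernoulli_pmf (1 - \<rho>)))"
  define Q where "Q = sample_pmf M \<rho>"
  have Q: "Q = Pi_pmf I (False, False) P"
    unfolding Q_def sample_pmf_def I_def P_def using Mc by simp
  have finQ: "finite (set_pmf Q)" unfolding Q by (rule finite_set_Pi_pmf[OF finI])
  define ind :: "bool \<times> bool \<Rightarrow> real" where "ind y = (if fst y \<and> snd y then 1 else 0)" for y
  define pr where "pr i j = M $$ (i,j) * (1 - \<rho>)" for i j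
  define \<xi> where "\<xi> w i j = ind (w (i,j)) - pr i j" for w :: "nat \<times> nat \<Rightarrow> bool \<times> bool" and i j
  define Lf where "Lf w X = (\<Sum>i<m. \<Sum>j<n. \<xi> w i j * (X $$ (i,j) - M $$ (i,j)))" for w X
  define S where "S = {Fu * D * transpose_mat Fv | D. feasible_D Fu Fv d t D}"
  define f where "f w = Sup ((\<lambda>X. Lf w X) ` S)" for w
  define Dst where "Dst = transpose_mat Fu * M * Fv"
  define Xu where "Xu = (MAX i\<in>{..<m}. row_norm Fu i)"
  define Xv where "Xv = (MAX j\<in>{..<n}. row_norm Fv j)"
  define G where "G w a b = (\<Sum>i<m. \<Sum>j<n. \<xi> w i j * (Fu $$ (i,a) * Fv $$ (j,b)))" for w a b
  define Gn where "Gn w = sqrt (\<Sum>a<d. \<Sum>b<d. (G w a b)^2)" for w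
  define R where "R = min (2 * t) (sqrt N)"
  have Fut: "transpose_mat Fu \<in> carrier_mat d m" using Fu by simp
  have Fvt: "transpose_mat Fv \<in> carrier_mat d n" using Fv by simp
  have Dstc: "Dst \<in> carrier_mat d d" unfolding Dst_def using Fu Fv Mc by simp
  have DstM: "Fu * Dst * transpose_mat Fv = M"
  proof -
    have FM: "transpose_mat Fu * M \<in> carrier_mat d n" using Fut Mc by simp
    have "Fu * transpose_mat Fu * M = Fu * (transpose_mat Fu * M)"
      by (rule assoc_mult_mat[OF Fu Fut Mc])
    moreover have "Fu * (transpose_mat Fu * M) * Fv = Fu * (transpose_mat Fu * M * Fv)"
      by (rule assoc_mult_mat[OF Fu FM Fv])
    ultimately show ?thesis using Mproj unfolding Dst_def by simp
  qed
  have t0: "t \<ge> 0"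
    using frob_le_nuclear[OF Mc] Mt by (meson order_trans real_sqrt_ge_zero sum_nonneg zero_le_power2)
  have featDst: "feasible_D Fu Fv d t Dst"
  proof -
    have "nuclear_norm Dst = nuclear_norm M"
      using nuclear_conj[OF Fu Fv Dstc FuFu FvFv] DstM by simp
    thus ?thesis unfolding feasible_D_def DstM using Dstc Mt M01 Fu Fv by auto
  qed
  have DstS: "M \<in> S" unfolding S_def using featDst DstM by blast
  have Sne: "S \<noteq> {}" using DstS by blast
  have S01: "0 \<le> X $$ (i,j) \<and> X $$ (i,j) \<le> 1" if "X \<in> S" "i < m" "j < n" for X i j
    using that Fu Fv unfolding S_def feasible_D_def by auto
  have ind01: "ind y = 0 \<or> ind y = 1" for y unfolding ind_def by simp
  have pr01: "0 \<le> pr i j \<and> pr i j \<le> 1" if "i < m" "j < n" for i j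
  proof -
    have "0 \<le> M $$ (i,j)" "M $$ (i,j) \<le> 1" using M01 that by auto
    moreover have "0 \<le> 1 - \<rho>" "1 - \<rho> \<le> 1" using r0 r1 by auto
    ultimately show ?thesis unfolding pr_def by (simp add: mult_le_one)
  qed
  have xi1: "\<bar>\<xi> w i j\<bar> \<le> 1" if "i < m" "j < n" for w i j
    using pr01[OF that] ind01[of "w (i,j)"] unfolding \<xi>_def by auto
  have Lbound: "\<bar>Lf w X\<bar> \<le> N" if X: "X \<in> S" for w X
  proof -
    have "\<bar>Lf w X\<bar> \<le> (\<Sum>i<m. \<Sum>j<n. \<bar>\<xi> w i j * (X $$ (i,j) - M $$ (i,j))\<bar>)"
      unfolding Lf_def by (rule order_trans[OF sum_abs sum_mono]) (rule sum_abs)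
    also have "\<dots> \<le> (\<Sum>i<m. \<Sum>j<n. 1)"
    proof (intro sum_mono)
      fix i j assume i: "i \<in> {..<m}" and j: "j \<in> {..<n}"
      have "\<bar>X $$ (i,j) - M $$ (i,j)\<bar> \<le> 1" using S01[OF X, of i j] M01[rule_format, of i j] i j by (auto simp: abs_le_iff)
      moreover have "\<bar>\<xi> w i j\<bar> \<le> 1" using xi1 i j by auto
      ultimately show "\<bar>\<xi> w i j * (X $$ (i,j) - M $$ (i,j))\<bar> \<le> 1"
        unfolding abs_mult by (metis abs_ge_zero mult_le_one)
    qed
    also have "\<dots> = N" unfolding N_def by simp
    finally show ?thesis .
  qed
  have bdd: "bdd_above ((\<lambda>X. Lf w X) ` S)" for w
    using Lbound by (intro bdd_aboveI[of _ N]) (auto dest: abs_le_D1)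
  have Lle_f: "Lf w X \<le> f w" if "X \<in> S" for w X
    unfolding f_def by (rule cSup_upper) (use that bdd in auto)
  have Ldiff: "\<bar>Lf (w(k:=y)) X - Lf w X\<bar> \<le> 1" if k: "k \<in> I" and X: "X \<in> S" for w k y X
  proof -
    obtain i0 j0 where k0: "k = (i0, j0)" "i0 < m" "j0 < n" using k unfolding I_def by auto
    define c where "c = (ind y - ind (w k)) * (X $$ (i0,j0) - M $$ (i0,j0))"
    have "Lf (w(k:=y)) X - Lf w X = (\<Sum>i<m. \<Sum>j<n. (\<xi> (w(k:=y)) i j - \<xi> w i j) * (X $$ (i,j) - M $$ (i,j)))"
      unfolding Lf_def by (simp add: sum_subtractf left_diff_distrib)
    also have "\<dots> = (\<Sum>i<m. \<Sum>j<n. if i = i0 then (if j = j0 then c else 0) else 0)"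
      by (intro sum.cong refl) (auto simp: \<xi>_def c_def k0)
    also have "\<dots> = (\<Sum>i<m. if i = i0 then (\<Sum>j<n. if j = j0 then c else 0) else 0)"
      by (intro sum.cong refl) auto
    also have "\<dots> = c" using k0 by (simp add: sum.delta)
    finally have eq: "Lf (w(k:=y)) X - Lf w X = c" .
    have "\<bar>ind y - ind (w k)\<bar> \<le> 1" using ind01[of y] ind01[of "w k"] by auto
    moreover have "\<bar>X $$ (i0,j0) - M $$ (i0,j0)\<bar> \<le> 1" using S01[OF X k0(2,3)] M01[rule_format, of i0 j0] k0 by (auto simp: abs_le_iff)
    ultimately have "\<bar>c\<bar> \<le> 1" unfolding c_def abs_mult by (metis abs_ge_zero mult_le_one)
    thus ?thesis using eq by simp
  qed
  have bd: "\<bar>f (w(k:=y)) - f w\<bar> \<le> 1" if k: "k \<in> I" for w k y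
  proof -
    have "f (w(k:=y)) \<le> f w + 1"
      unfolding f_def[of "w(k:=y)"]
    proof (rule cSup_least)
      show "(\<lambda>X. Lf (w(k:=y)) X) ` S \<noteq> {}" using Sne by simp
      fix z assume "z \<in> (\<lambda>X. Lf (w(k:=y)) X) ` S"
      then obtain X where X: "X \<in> S" and z: "z = Lf (w(k:=y)) X" by auto
      show "z \<le> f w + 1" using Ldiff[OF k X, of w y] Lle_f[OF X, of w] z by linarith
    qed
    moreover have "f w \<le> f (w(k:=y)) + 1"
      unfolding f_def[of w]
    proof (rule cSup_least)
      show "(\<lambda>X. Lf w X) ` S \<noteq> {}" using Sne by simp
      fix z assume "z \<in> (\<lambda>X. Lf w X) ` S"
      then obtain X where X: "X \<in> S" and z: "z = Lf w X" by auto
      show "z \<le> f (w(k:=y)) + 1" using Ldiff[OF k X, of w y] Lle_f[OF X, of "w(k:=y)"] z by linarith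
    qed
    ultimately show ?thesis by linarith
  qed
  have errb: "(\<Sum>i<m. \<Sum>j<n. (M $$ (i,j) - (Fu * Dhat (A_of m n w) * transpose_mat Fv) $$ (i,j))^2)
        \<le> 2 / (1 - \<rho>) * f w" for w
  proof -
    define A where "A = A_of m n w"
    have Ac: "A \<in> carrier_mat m n" unfolding A_def A_of_def by simp
    have Aent: "A $$ (i,j) = ind (w (i,j))" if "i < m" "j < n" for i j
      using that unfolding A_def A_of_def ind_def by simp
    have A01: "\<forall>i<m. \<forall>j<n. A $$ (i,j) \<in> {0,1}" using Aent ind01 by auto
    have optA: "optimal_D \<rho> Fu Fv d t A (Dhat A)" using opt Ac A01 by blast
    hence featH: "feasible_D Fu Fv d t (Dhat A)"
      and objle: "objective \<rho> Fu Fv A (Dhat A) \<le> objective \<rho> Fu Fv A Dst"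
      using featDst unfolding optimal_D_def by auto
    define Xh where "Xh = Fu * Dhat A * transpose_mat Fv"
    have XhS: "Xh \<in> S" unfolding S_def Xh_def using featH by blast
    have rF: "dim_row Fu = m" "dim_row Fv = n" using Fu Fv by auto
    have "(\<Sum>i<m. \<Sum>j<n. (M $$ (i,j) - Xh $$ (i,j))^2)
        = (\<Sum>i<m. \<Sum>j<n. (loss_tilde \<rho> (Xh $$ (i,j)) (A $$ (i,j)) - loss_tilde \<rho> (M $$ (i,j)) (A $$ (i,j)))
            + 2 / (1 - \<rho>) * (\<xi> w i j * (Xh $$ (i,j) - M $$ (i,j))))"
    proof (intro sum.cong refl)
      fix i j assume i: "i \<in> {..<m}" and j: "j \<in> {..<n}"
      have a: "A $$ (i,j) = 0 \<or> A $$ (i,j) = 1" using Aent[of i j] ind01 i j by auto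
      have xi: "\<xi> w i j = A $$ (i,j) - M $$ (i,j) * (1 - \<rho>)"
        using Aent[of i j] i j unfolding \<xi>_def pr_def by simp
      show "(M $$ (i,j) - Xh $$ (i,j))^2 = (loss_tilde \<rho> (Xh $$ (i,j)) (A $$ (i,j)) - loss_tilde \<rho> (M $$ (i,j)) (A $$ (i,j)))
            + 2 / (1 - \<rho>) * (\<xi> w i j * (Xh $$ (i,j) - M $$ (i,j)))"
        unfolding xi by (rule loss_identity[OF a r1])
    qed
    also have "\<dots> = (objective \<rho> Fu Fv A (Dhat A) - objective \<rho> Fu Fv A Dst) + 2 / (1 - \<rho>) * Lf w Xh"
      unfolding objective_def Lf_def rF DstM Xh_def[symmetric]
      by (simp add: sum.distrib sum_subtractf sum_distrib_left)
    also have "\<dots> \<le> 2 / (1 - \<rho>) * Lf w Xh" using objle by simp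
    also have "\<dots> \<le> 2 / (1 - \<rho>) * f w"
      by (rule mult_left_mono[OF Lle_f[OF XhS]]) (use r1 in simp)
    finally show ?thesis unfolding Xh_def A_def .
  qed
  have nucDst: "nuclear_norm Dst \<le> t"
    using featDst unfolding feasible_D_def by simp
  have L2pair: "L2_set g ({..<d} \<times> {..<d}) = sqrt (\<Sum>a<d. \<Sum>b<d. (g (a,b))^2)" for g :: "nat \<times> nat \<Rightarrow> real"
    unfolding L2_set_def by (simp add: sum.cartesian_product)
  have LG: "Lf w X \<le> R * Gn w" if X: "X \<in> S" for w X
  proof -
    obtain D where XD: "X = Fu * D * transpose_mat Fv" and fD: "feasible_D Fu Fv d t D"
      using X unfolding S_def by blast
    have Dc: "D \<in> carrier_mat d d" and nucD: "nuclear_norm D \<le> t" using fD unfolding feasible_D_def by auto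
    define E where "E = D - Dst"
    have Ec: "E \<in> carrier_mat d d" unfolding E_def by (rule minus_carrier_mat[OF Dstc])
    have Eent: "E $$ (a,b) = D $$ (a,b) - Dst $$ (a,b)" if "a < d" "b < d" for a b
      unfolding E_def using that Dc Dstc by simp
    have XM: "X $$ (i,j) - M $$ (i,j) = (Fu * E * transpose_mat Fv) $$ (i,j)" if ij: "i < m" "j < n" for i j
    proof -
      have "X $$ (i,j) - M $$ (i,j) = (Fu * D * transpose_mat Fv) $$ (i,j) - (Fu * Dst * transpose_mat Fv) $$ (i,j)"
        unfolding XD DstM ..
      also have "\<dots> = (\<Sum>a<d. \<Sum>b<d. Fu $$ (i,a) * E $$ (a,b) * Fv $$ (j,b))"
        unfolding conj_entry[OF Fu Fv Dc ij] conj_entry[OF Fu Fv Dstc ij]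
        by (simp add: Eent sum_subtractf[symmetric] algebra_simps)
      also have "\<dots> = (Fu * E * transpose_mat Fv) $$ (i,j)"
        by (rule conj_entry[OF Fu Fv Ec ij, symmetric])
      finally show ?thesis .
    qed
    have "Lf w X = (\<Sum>i<m. \<Sum>j<n. \<xi> w i j * (\<Sum>a<d. \<Sum>b<d. Fu $$ (i,a) * E $$ (a,b) * Fv $$ (j,b)))"
      unfolding Lf_def by (intro sum.cong refl) (simp add: XM conj_entry[OF Fu Fv Ec])
    also have "\<dots> = (\<Sum>i<m. \<Sum>j<n. \<Sum>a<d. \<Sum>b<d. E $$ (a,b) * (\<xi> w i j * (Fu $$ (i,a) * Fv $$ (j,b))))"
      by (simp add: sum_distrib_left mult_ac)
    also have "\<dots> = (\<Sum>i<m. \<Sum>a<d. \<Sum>j<n. \<Sum>b<d. E $$ (a,b) * (\<xi> w i j * (Fu $$ (i,a) * Fv $$ (j,b))))"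
      by (rule sum.cong[OF refl], rule sum.swap)
    also have "\<dots> = (\<Sum>a<d. \<Sum>i<m. \<Sum>j<n. \<Sum>b<d. E $$ (a,b) * (\<xi> w i j * (Fu $$ (i,a) * Fv $$ (j,b))))"
      by (rule sum.swap)
    also have "\<dots> = (\<Sum>a<d. \<Sum>i<m. \<Sum>b<d. \<Sum>j<n. E $$ (a,b) * (\<xi> w i j * (Fu $$ (i,a) * Fv $$ (j,b))))"
      by (rule sum.cong[OF refl], rule sum.cong[OF refl], rule sum.swap)
    also have "\<dots> = (\<Sum>a<d. \<Sum>b<d. \<Sum>i<m. \<Sum>j<n. E $$ (a,b) * (\<xi> w i j * (Fu $$ (i,a) * Fv $$ (j,b))))"
      by (rule sum.cong[OF refl], rule sum.swap)
    also have "\<dots> = (\<Sum>a<d. \<Sum>b<d. E $$ (a,b) * G w a b)"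
      unfolding G_def by (simp add: sum_distrib_left)
    also have "\<dots> = (\<Sum>p\<in>{..<d} \<times> {..<d}. E $$ p * G w (fst p) (snd p))"
      by (subst sum.cartesian_product) (rule sum.cong, auto)
    also have "\<dots> \<le> (\<Sum>p\<in>{..<d} \<times> {..<d}. \<bar>E $$ p\<bar> * \<bar>G w (fst p) (snd p)\<bar>)"
      by (intro sum_mono) (metis abs_ge_self abs_mult)
    also have "\<dots> \<le> L2_set (\<lambda>p. E $$ p) ({..<d} \<times> {..<d}) * L2_set (\<lambda>p. G w (fst p) (snd p)) ({..<d} \<times> {..<d})"
      by (rule L2_set_mult_ineq)
    also have "L2_set (\<lambda>p. G w (fst p) (snd p)) ({..<d} \<times> {..<d}) = Gn w"
      unfolding L2pair Gn_def by simp
    also have "L2_set (\<lambda>p. E $$ p) ({..<d} \<times> {..<d}) \<le> R"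
    proof -
      have "L2_set (\<lambda>p. E $$ p) ({..<d} \<times> {..<d}) = L2_set (\<lambda>p. D $$ p + (- Dst $$ p)) ({..<d} \<times> {..<d})"
        by (intro L2_set_cong refl) (auto simp: Eent)
      also have "\<dots> \<le> L2_set (\<lambda>p. D $$ p) ({..<d} \<times> {..<d}) + L2_set (\<lambda>p. - Dst $$ p) ({..<d} \<times> {..<d})"
        by (rule L2_set_triangle_ineq)
      also have "L2_set (\<lambda>p. D $$ p) ({..<d} \<times> {..<d}) \<le> t"
        using frob_le_nuclear[OF Dc] nucD unfolding L2pair by simp
      also have "L2_set (\<lambda>p. - Dst $$ p) ({..<d} \<times> {..<d}) \<le> t"
        using frob_le_nuclear[OF Dstc] nucDst unfolding L2pair by simp
      finally have le2t: "L2_set (\<lambda>p. E $$ p) ({..<d} \<times> {..<d}) \<le> 2 * t" by simp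
      have "(\<Sum>a<d. \<Sum>b<d. (E $$ (a,b))^2) = (\<Sum>i<m. \<Sum>j<n. ((Fu * E * transpose_mat Fv) $$ (i,j))^2)"
        by (rule frob_conj[OF Fu Fv Ec FuFu FvFv, symmetric])
      also have "\<dots> = (\<Sum>i<m. \<Sum>j<n. (X $$ (i,j) - M $$ (i,j))^2)"
        by (intro sum.cong refl) (simp add: XM)
      also have "\<dots> \<le> (\<Sum>i<m. \<Sum>j<n. 1)"
      proof (intro sum_mono)
        fix i j assume i: "i \<in> {..<m}" and j: "j \<in> {..<n}"
        have "\<bar>X $$ (i,j) - M $$ (i,j)\<bar> \<le> 1"
          using S01[OF X, of i j] M01[rule_format, of i j] i j by (auto simp: abs_le_iff)
        hence "\<bar>X $$ (i,j) - M $$ (i,j)\<bar>^2 \<le> 1^2" by (intro power_mono) auto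
        thus "(X $$ (i,j) - M $$ (i,j))^2 \<le> 1" by simp
      qed
      also have "\<dots> = N" unfolding N_def by simp
      finally have "L2_set (\<lambda>p. E $$ p) ({..<d} \<times> {..<d}) \<le> sqrt N"
        unfolding L2pair by simp
      with le2t show ?thesis unfolding R_def by simp
    qed
    hence "L2_set (\<lambda>p. E $$ p) ({..<d} \<times> {..<d}) * Gn w \<le> R * Gn w"
      by (rule mult_right_mono) (simp add: Gn_def sum_nonneg)
    finally show ?thesis .
  qed
  have fG: "f w \<le> R * Gn w" for w
    unfolding f_def by (rule cSup_least) (use Sne LG in auto)
  define ru where "ru i = (\<Sum>a<d. (Fu $$ (i,a))^2)" for i
  define rv where "rv j = (\<Sum>b<d. (Fv $$ (j,b))^2)" for j
  have rnu: "row_norm Fu i = sqrt (ru i)" for i unfolding row_norm_def ru_def using Fu by simp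
  have rnv: "row_norm Fv j = sqrt (rv j)" for j unfolding row_norm_def rv_def using Fv by simp
  have ru0: "ru i \<ge> 0" for i unfolding ru_def by (intro sum_nonneg) auto
  have rv0: "rv j \<ge> 0" for j unfolding rv_def by (intro sum_nonneg) auto
  have sumU: "(\<Sum>i<m. ru i) = real d"
  proof -
    have "(\<Sum>i<m. ru i) = mtr (transpose_mat Fu * Fu)" unfolding ru_def by (rule frob_mtr[OF Fu])
    also have "\<dots> = real d" unfolding FuFu mtr_def by simp
    finally show ?thesis .
  qed
  have sumV: "(\<Sum>j<n. rv j) = real d"
  proof -
    have "(\<Sum>j<n. rv j) = mtr (transpose_mat Fv * Fv)" unfolding rv_def by (rule frob_mtr[OF Fv])
    also have "\<dots> = real d" unfolding FvFv mtr_def by simp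
    finally show ?thesis .
  qed
  have XuI: "row_norm Fu i \<le> Xu" if "i < m" for i unfolding Xu_def by (rule Max_ge) (use that in auto)
  have XvI: "row_norm Fv j \<le> Xv" if "j < n" for j unfolding Xv_def by (rule Max_ge) (use that in auto)
  have Xu0: "Xu \<ge> 0" using XuI[OF m0] rnu[of 0] by (metis order_trans real_sqrt_ge_zero ru0)
  have Xv0: "Xv \<ge> 0" using XvI[OF n0] rnv[of 0] by (metis order_trans real_sqrt_ge_zero rv0)
  have ruX: "ru i \<le> Xu^2" if "i < m" for i
  proof -
    have "sqrt (ru i) \<le> Xu" using XuI[OF that] rnu by simp
    hence "(sqrt (ru i))^2 \<le> Xu^2" by (intro power_mono) (auto simp: ru0)
    thus ?thesis using ru0[of i] by simp
  qed
  have rvX: "rv j \<le> Xv^2" if "j < n" for j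
  proof -
    have "sqrt (rv j) \<le> Xv" using XvI[OF that] rnv by simp
    hence "(sqrt (rv j))^2 \<le> Xv^2" by (intro power_mono) (auto simp: rv0)
    thus ?thesis using rv0[of j] by simp
  qed
  have dU: "real d \<le> real m * Xu^2"
  proof -
    have "(\<Sum>i<m. ru i) \<le> (\<Sum>i<m. Xu^2)" by (intro sum_mono) (use ruX in auto)
    thus ?thesis using sumU by simp
  qed
  have dV: "real d \<le> real n * Xv^2"
  proof -
    have "(\<Sum>j<n. rv j) \<le> (\<Sum>j<n. Xv^2)" by (intro sum_mono) (use rvX in auto)
    thus ?thesis using sumV by simp
  qed
  have sN: "(sqrt N * Xu * Xv)^2 = (real m * Xu^2) * (real n * Xv^2)"
    unfolding N_def using m0 n0 by (simp add: power_mult_distrib real_sqrt_mult)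
  have sd2: "(sqrt N * Xu * Xv)^2 \<ge> (real d)^2"
  proof -
    have "real d * real d \<le> (real m * Xu^2) * (real n * Xv^2)"
      by (rule mult_mono[OF dU dV]) auto
    thus ?thesis unfolding sN by (simp add: power2_eq_square)
  qed
  have sN0: "sqrt N * Xu * Xv \<ge> 0" using Xu0 Xv0 N0 by simp
  have sdd: "sqrt N * Xu * Xv \<ge> real d"
    by (rule power2_le_imp_le[OF sd2 sN0])
  have sd: "sqrt N * Xu * Xv \<ge> 1" using sdd d0 by linarith
  define \<alpha> where "\<alpha> k y = ind y - pr (fst k) (snd k)" for k :: "nat \<times> nat" and y
  define cc where "cc a b k = Fu $$ (fst k, a) * Fv $$ (snd k, b)" for a b and k :: "nat \<times> nat"
  have Galt: "G w a b = (\<Sum>k\<in>I. cc a b k * \<alpha> k (w k))" for w a b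
    unfolding G_def I_def cc_def \<alpha>_def \<xi>_def
    by (subst sum.cartesian_product) (rule sum.cong, auto simp: mult_ac)
  have Pk: "P k = pair_pmf (bernoulli_pmf (M $$ (fst k, snd k))) (bernoulli_pmf (1 - \<rho>))" for k
    unfolding P_def by (simp add: case_prod_beta)
  have Eal: "measure_pmf.expectation (P k) (\<alpha> k) = 0"
    and Eal2: "measure_pmf.expectation (P k) (\<lambda>y. (\<alpha> k y)^2) \<le> 1 - \<rho>" if k: "k \<in> I" for k
  proof -
    define q where "q = M $$ (fst k, snd k)"
    define r where "r = 1 - \<rho>"
    have q: "0 \<le> q" "q \<le> 1" unfolding q_def using M01 k unfolding I_def by auto
    have r: "0 \<le> r" "r \<le> 1" unfolding r_def using r0 r1 by auto
    have prk: "pr (fst k) (snd k) = q * r" unfolding pr_def q_def r_def by simp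
    have indv: "ind (True,True) = 1" "ind (True,False) = 0" "ind (False,True) = 0" "ind (False,False) = 0"
      unfolding ind_def by auto
    show "measure_pmf.expectation (P k) (\<alpha> k) = 0"
      unfolding Pk q_def[symmetric] r_def[symmetric]
      by (subst bern_pair_expect[OF q r]) (simp add: \<alpha>_def prk indv algebra_simps)
    have "measure_pmf.expectation (P k) (\<lambda>y. (\<alpha> k y)^2)
        = q * r * (1 - q * r)^2 + q * (1 - r) * (q * r)^2 + (1 - q) * r * (q * r)^2 + (1 - q) * (1 - r) * (q * r)^2"
      unfolding Pk q_def[symmetric] r_def[symmetric]
      by (subst bern_pair_expect[OF q r]) (simp add: \<alpha>_def prk indv)
    also have "\<dots> = q * r * (1 - q * r)"
      by (simp add: algebra_simps power2_eq_square)
    also have "\<dots> \<le> r"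
    proof -
      have "q * r \<le> r" using q r by (simp add: mult_left_le_one_le)
      moreover have "0 \<le> q * r" using q r by simp
      ultimately have "q * r * (1 - q * r) \<le> q * r * 1"
        by (intro mult_left_mono) auto
      thus ?thesis using \<open>q * r \<le> r\<close> by linarith
    qed
    finally show "measure_pmf.expectation (P k) (\<lambda>y. (\<alpha> k y)^2) \<le> 1 - \<rho>" unfolding r_def .
  qed
  have EG2: "measure_pmf.expectation Q (\<lambda>w. (G w a b)^2) \<le> (1 - \<rho>) * (\<Sum>k\<in>I. (cc a b k)^2)" for a b
  proof -
    have "measure_pmf.expectation Q (\<lambda>w. (G w a b)^2)
        = (\<Sum>k\<in>I. (cc a b k)^2 * measure_pmf.expectation (P k) (\<lambda>y. (\<alpha> k y)^2))"
      unfolding Galt Q by (rule second_moment_indep[OF finI Eal])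
    also have "\<dots> \<le> (\<Sum>k\<in>I. (cc a b k)^2 * (1 - \<rho>))"
      by (intro sum_mono mult_left_mono Eal2) auto
    finally show ?thesis by (simp add: sum_distrib_left mult_ac)
  qed
  have EGn2sq: "measure_pmf.expectation Q (\<lambda>w. (Gn w)^2) \<le> (1 - \<rho>) * ((\<Sum>i<m. ru i) * (\<Sum>j<n. rv j))"
  proof -
    have "measure_pmf.expectation Q (\<lambda>w. (Gn w)^2) = measure_pmf.expectation Q (\<lambda>w. \<Sum>a<d. \<Sum>b<d. (G w a b)^2)"
      unfolding Gn_def by (simp add: sum_nonneg)
    also have "\<dots> = (\<Sum>a<d. \<Sum>b<d. measure_pmf.expectation Q (\<lambda>w. (G w a b)^2))"
      by (simp add: expectation_sum_pmf[OF finQ])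
    also have "\<dots> \<le> (\<Sum>a<d. \<Sum>b<d. (1 - \<rho>) * (\<Sum>k\<in>I. (cc a b k)^2))"
      by (intro sum_mono EG2)
    also have "\<dots> = (1 - \<rho>) * ((\<Sum>i<m. ru i) * (\<Sum>j<n. rv j))"
    proof -
      have "(\<Sum>a<d. \<Sum>b<d. (1 - \<rho>) * (\<Sum>k\<in>I. (cc a b k)^2)) = (1 - \<rho>) * (\<Sum>a<d. \<Sum>b<d. \<Sum>k\<in>I. (cc a b k)^2)"
        by (simp only: sum_distrib_left)
      also have "(\<Sum>a<d. \<Sum>b<d. (\<Sum>k\<in>I. (cc a b k)^2)) = (\<Sum>k\<in>I. \<Sum>a<d. \<Sum>b<d. (cc a b k)^2)"
        by (subst sum.swap, rule sum.cong[OF refl], rule sum.swap)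
      also have "\<dots> = (\<Sum>k\<in>I. ru (fst k) * rv (snd k))"
        unfolding cc_def ru_def rv_def by (simp add: power_mult_distrib sum_product)
      also have "\<dots> = (\<Sum>i<m. ru i) * (\<Sum>j<n. rv j)"
        unfolding I_def sum_product by (subst sum.cartesian_product) (rule sum.cong, auto)
      finally show ?thesis .
    qed
    finally show ?thesis .
  qed
  have EGnsq: "measure_pmf.expectation Q Gn \<le> sqrt ((1 - \<rho>) * ((\<Sum>i<m. ru i) * (\<Sum>j<n. rv j)))"
    using expectation_le_sqrt_second[OF finQ, of Gn] EGn2sq by (meson order_trans real_sqrt_le_iff)
  have EGn1: "measure_pmf.expectation Q Gn \<le> sqrt (1 - \<rho>) * (sqrt N * Xu * Xv)"
  proof -
    have "(\<Sum>i<m. ru i) * (\<Sum>j<n. rv j) \<le> (real m * Xu^2) * (real n * Xv^2)"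
      using sumU sumV dU dV by (intro mult_mono) auto
    hence "(1 - \<rho>) * ((\<Sum>i<m. ru i) * (\<Sum>j<n. rv j)) \<le> (1 - \<rho>) * (sqrt N * Xu * Xv)^2"
      unfolding sN using r1 by (intro mult_left_mono) auto
    hence "sqrt ((1 - \<rho>) * ((\<Sum>i<m. ru i) * (\<Sum>j<n. rv j))) \<le> sqrt ((1 - \<rho>) * (sqrt N * Xu * Xv)^2)"
      by simp
    also have "\<dots> = sqrt (1 - \<rho>) * (sqrt N * Xu * Xv)"
      using sN0 by (simp add: real_sqrt_mult)
    finally show ?thesis using EGnsq by linarith
  qed
  have EGn2: "measure_pmf.expectation Q Gn \<le> sqrt (1 - \<rho>) * d"
  proof -
    have "sqrt ((1 - \<rho>) * ((\<Sum>i<m. ru i) * (\<Sum>j<n. rv j))) = sqrt (1 - \<rho>) * d"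
      unfolding sumU sumV by (simp add: real_sqrt_mult)
    thus ?thesis using EGnsq by linarith
  qed
  have Ef: "measure_pmf.expectation Q f \<le> R * measure_pmf.expectation Q Gn"
  proof -
    have "measure_pmf.expectation Q f \<le> measure_pmf.expectation Q (\<lambda>w. R * Gn w)"
      by (intro integral_mono_AE) (use finQ fG in \<open>auto intro: integrable_measure_pmf_finite simp: AE_measure_pmf_iff\<close>)
    thus ?thesis by simp
  qed
  define \<tau> where "\<tau> = sqrt (N * ln (1 / \<delta>) / 2)"
  have tau0: "\<tau> > 0" unfolding \<tau>_def using N0 dl0 dl1 by simp
  have mcd: "measure_pmf.prob Q {w. f w \<ge> measure_pmf.expectation Q f + \<tau>} \<le> \<delta>"
  proof -
    have "measure_pmf.prob Q {w. f w \<ge> measure_pmf.expectation Q f + \<tau>}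
        \<le> exp (- 2 * \<tau>^2 / (1^2 * real (card I)))"
      unfolding Q by (rule mcdiarmid[OF finI _ _ tau0 bd]) (use cardI m0 n0 in auto)
    also have "- 2 * \<tau>^2 / (1^2 * real (card I)) = ln \<delta>"
    proof -
      have "\<tau>^2 = N * ln (1 / \<delta>) / 2"
        unfolding \<tau>_def using N0 dl0 dl1 by (subst real_sqrt_pow2) (auto intro!: divide_nonneg_pos mult_nonneg_nonneg)
      thus ?thesis using N0 dl0 cardI m0 n0 unfolding N_def by (simp add: ln_div)
    qed
    also have "exp (ln \<delta>) = \<delta>" using dl0 by simp
    finally show ?thesis .
  qed
  have good: "(1 / N) * (\<Sum>i<m. \<Sum>j<n. (M $$ (i,j) - (Fu * Dhat (A_of m n w) * transpose_mat Fv) $$ (i,j))^2)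
              \<le> 6 * sqrt (ln (2 / \<delta>)) / (sqrt N * (1 - \<rho>))
                + 4 * t * sqrt (ln (2 * real d)) / (sqrt N * sqrt (1 - \<rho>)) * Xu * Xv"
    if fw: "f w < measure_pmf.expectation Q f + \<tau>" for w
  proof -
    define err where "err = (\<Sum>i<m. \<Sum>j<n. (M $$ (i,j) - (Fu * Dhat (A_of m n w) * transpose_mat Fv) $$ (i,j))^2)"
    define L2 where "L2 = ln (2 / \<delta>)"
    define l where "l = ln (2 * real d)"
    define \<gamma> where "\<gamma> = sqrt (1 - \<rho>)"
    define s where "s = sqrt N * Xu * Xv"
    define EG where "EG = measure_pmf.expectation Q Gn"
    define Ef where "Ef = measure_pmf.expectation Q f"
    have g0: "\<gamma> > 0" "\<gamma> \<le> 1" unfolding \<gamma>_def using r0 r1 by auto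
    have gg: "\<gamma> * \<gamma> = 1 - \<rho>" unfolding \<gamma>_def using r1 by simp
    have R0: "R \<ge> 0" unfolding R_def using t0 N0 by simp
    have sqN: "sqrt N * sqrt N = N" using N0 by simp
    have sqN0: "sqrt N > 0" using N0 by simp
    have L2h: "L2 \<ge> 1/2"
    proof -
      have "ln 2 \<le> L2" unfolding L2_def using dl0 dl1 by (subst ln_le_cancel_iff) (auto simp: field_simps)
      thus ?thesis using ln_facts(1) by simp
    qed
    define x where "x = sqrt L2"
    have x: "x \<ge> 1/2"
    proof -
      have "sqrt (1/4) \<le> x" unfolding x_def using L2h by (subst real_sqrt_le_iff) simp
      moreover have "sqrt (1/4 :: real) = 1/2" by (simp add: real_sqrt_divide)
      ultimately show ?thesis by simp
    qed
    have tau_le: "\<tau> \<le> sqrt N * x"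
    proof -
      have "ln (1 / \<delta>) \<le> L2" unfolding L2_def using dl0 dl1 by (subst ln_le_cancel_iff) (auto simp: field_simps)
      moreover have "ln (1 / \<delta>) \<ge> 0" using dl0 dl1 by simp
      ultimately have "N * ln (1 / \<delta>) / 2 \<le> N * L2" using N0 by (simp add: field_simps)
      hence "\<tau> \<le> sqrt (N * L2)" unfolding \<tau>_def by simp
      thus ?thesis unfolding x_def by (simp add: real_sqrt_mult)
    qed
    have claimA: "\<tau> + sqrt N \<le> 3 * sqrt N * x"
    proof -
      have "sqrt N * 1 \<le> sqrt N * (2 * x)" using x sqN0 by (intro mult_left_mono) auto
      hence "sqrt N \<le> 2 * (sqrt N * x)" by (simp add: mult_ac)
      moreover have "3 * sqrt N * x = 3 * (sqrt N * x)" by simp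
      ultimately show ?thesis using tau_le by linarith
    qed
    have sg: "s \<ge> 1" unfolding s_def using sd .
    have claimB: "R * EG \<le> sqrt N + 2 * t * sqrt l * s * \<gamma>"
    proof (cases "d = 1")
      case True
      have l: "sqrt l \<ge> 1/2"
      proof -
        have "l = ln 2" unfolding l_def True by simp
        hence "l \<ge> 1/4" using ln_facts(1) by simp
        hence "sqrt (1/4) \<le> sqrt l" by (subst real_sqrt_le_iff) simp
        moreover have "sqrt (1/4 :: real) = 1/2" by (simp add: real_sqrt_divide)
        ultimately show ?thesis by simp
      qed
      have "R * EG \<le> R * \<gamma>"
        using mult_left_mono[OF EGn2 R0] True unfolding EG_def \<gamma>_def by simp
      also have "\<dots> \<le> sqrt N + t * s * \<gamma>"
      proof (cases "2 * t \<le> sqrt N")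
        case True
        hence R: "R = 2 * t" unfolding R_def by simp
        have "(t * \<gamma>) * 1 \<le> (t * \<gamma>) * s" using sg t0 g0 by (intro mult_left_mono) auto
        hence "t * \<gamma> \<le> t * s * \<gamma>" by (simp add: mult_ac)
        moreover have "t * \<gamma> \<le> sqrt N"
        proof -
          have "t * \<gamma> \<le> t * 1" using t0 g0 by (intro mult_left_mono) auto
          thus ?thesis using True t0 by linarith
        qed
        ultimately show ?thesis unfolding R by linarith
      next
        case False
        hence R: "R = sqrt N" unfolding R_def by simp
        have "sqrt N * \<gamma> \<le> sqrt N" using g0 sqN0 by (simp add: mult_left_le)
        moreover have "0 \<le> t * s * \<gamma>" using t0 sg g0 by simp
        ultimately show ?thesis unfolding R by linarith
      qed
      also have "t * s * \<gamma> \<le> 2 * t * sqrt l * s * \<gamma>"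
      proof -
        have "t * s * \<gamma> * 1 \<le> t * s * \<gamma> * (2 * sqrt l)"
          using l t0 sg g0 by (intro mult_left_mono) auto
        thus ?thesis by (simp add: mult_ac)
      qed
      finally show ?thesis by simp
    next
      case False
      hence d2: "d \<ge> 2" using d0 by simp
      have l: "sqrt l \<ge> 1"
      proof -
        have "ln 4 \<le> l" unfolding l_def using d2 by (subst ln_le_cancel_iff) auto
        hence "l \<ge> 1" using ln_facts(2) by simp
        thus ?thesis by simp
      qed
      have "R * EG \<le> R * (\<gamma> * s)"
        using mult_left_mono[OF EGn1 R0] unfolding EG_def \<gamma>_def s_def by simp
      also have "\<dots> \<le> 2 * t * (\<gamma> * s)"
        by (rule mult_right_mono) (use sg g0 in \<open>auto simp: R_def\<close>)
      also have "\<dots> \<le> 2 * t * sqrt l * s * \<gamma>"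
      proof -
        have "2 * t * (\<gamma> * s) * 1 \<le> 2 * t * (\<gamma> * s) * sqrt l"
          using l t0 sg g0 by (intro mult_left_mono) auto
        thus ?thesis by (simp add: mult_ac)
      qed
      finally show ?thesis using sqN0 by linarith
    qed
    have Efle: "Ef \<le> R * EG" unfolding Ef_def EG_def by (rule Ef)
    have fwle: "f w \<le> 3 * sqrt N * x + 2 * t * sqrt l * s * \<gamma>"
      using fw claimA claimB Efle unfolding Ef_def by linarith
    have "(1 / N) * err \<le> (1 / N) * (2 / (1 - \<rho>) * f w)"
      unfolding err_def using errb[of w] N0 by (intro mult_left_mono) auto
    also have "\<dots> \<le> (1 / N) * (2 / (1 - \<rho>) * (3 * sqrt N * x + 2 * t * sqrt l * s * \<gamma>))"
      using fwle N0 r1 by (intro mult_left_mono) auto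
    also have "\<dots> = (1 / (sqrt N * sqrt N)) * (2 / (\<gamma> * \<gamma>) * (3 * sqrt N * x + 2 * t * sqrt l * (sqrt N * Xu * Xv) * \<gamma>))"
      unfolding s_def using sqN gg by simp
    also have "\<dots> = 6 * x / (sqrt N * (\<gamma> * \<gamma>)) + 4 * t * sqrt l / (sqrt N * \<gamma>) * Xu * Xv"
      by (rule alg_final) (use sqN0 g0 in auto)
    also have "\<dots> = 6 * x / (sqrt N * (1 - \<rho>)) + 4 * t * sqrt l / (sqrt N * \<gamma>) * Xu * Xv"
      using gg by simp
    finally show ?thesis unfolding err_def x_def L2_def l_def \<gamma>_def .
  qed
  have lowb: "measure_pmf.prob Q {w. \<not> (f w \<ge> measure_pmf.expectation Q f + \<tau>)} \<ge> 1 - \<delta>"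
  proof -
    have "{w. \<not> (f w \<ge> measure_pmf.expectation Q f + \<tau>)}
        = space (measure_pmf Q) - {w. f w \<ge> measure_pmf.expectation Q f + \<tau>}" by auto
    hence "measure_pmf.prob Q {w. \<not> (f w \<ge> measure_pmf.expectation Q f + \<tau>)}
        = 1 - measure_pmf.prob Q {w. f w \<ge> measure_pmf.expectation Q f + \<tau>}"
      using measure_pmf.prob_compl[of "{w. f w \<ge> measure_pmf.expectation Q f + \<tau>}" Q] by simp
    thus ?thesis using mcd by simp
  qed
  have sub: "{w. \<not> (f w \<ge> measure_pmf.expectation Q f + \<tau>)} \<subseteq> {\<omega>. let Mhat = Fu * Dhat (A_of m n \<omega>) * transpose_mat Fv in
              (1 / (real m * real n)) * (\<Sum>i<m. \<Sum>j<n. (M $$ (i,j) - Mhat $$ (i,j))^2)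
              \<le> 6 * sqrt (ln (2 / \<delta>)) / (sqrt (real m * real n) * (1 - \<rho>))
                + 4 * t * sqrt (ln (2 * real d)) / (sqrt (real m * real n) * sqrt (1 - \<rho>))
                  * (MAX i\<in>{..<m}. row_norm Fu i) * (MAX j\<in>{..<n}. row_norm Fv j)}"
    using good unfolding N_def Xu_def Xv_def Let_def by (auto simp: not_le)
  have "measure_pmf.prob Q {w. \<not> (f w \<ge> measure_pmf.expectation Q f + \<tau>)} \<le> measure_pmf.prob Q {\<omega>. let Mhat = Fu * Dhat (A_of m n \<omega>) * transpose_mat Fv in
              (1 / (real m * real n)) * (\<Sum>i<m. \<Sum>j<n. (M $$ (i,j) - Mhat $$ (i,j))^2)
              \<le> 6 * sqrt (ln (2 / \<delta>)) / (sqrt (real m * real n) * (1 - \<rho>))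
                + 4 * t * sqrt (ln (2 * real d)) / (sqrt (real m * real n) * sqrt (1 - \<rho>))
                  * (MAX i\<in>{..<m}. row_norm Fu i) * (MAX j\<in>{..<n}. row_norm Fv j)}"
    by (rule measure_pmf.finite_measure_mono[OF sub]) simp
  with lowb show ?thesis unfolding Q_def by linarith
qed


end
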